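(* Let $(\tilde T_i)_i$ be the points of a homogeneous rate-$1$ Poisson process on $[0,\infty)$ and $\alpha>1$. Then for all $w>0$, $$\mathbb E\Big[\exp\Big(-w\sum_i\tilde T_i^{-\alpha}\Big)\Big]=\exp\big(-w^{1/\alpha}\Gamma(1-\alpha^{-1})\big).$$ Moreover, if $\tilde\varepsilon\in(0,1]$, $\tilde\delta\in(0,1/3]$ and $1<\alpha\le\frac{e^{-4.2}\tilde\delta\tilde\varepsilon^2}{-\ln\tilde\delta}+1$, then $$\Pr\Big(\sum_i\tilde T_i^{-\alpha}\notin\Big[\frac{e^{-\tilde\varepsilon/2}}{\alpha-1},\,\frac{e^{\tilde\varepsilon/2}}{\alpha-1}\Big]\Big)\le\tilde\delta.$$
   Context: $\Gamma$ denotes the Gamma function. *)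

theory Defs
  imports "HOL-Probability.Probability"
begin

text \<open>Points of a homogeneous rate-1 Poisson process on [0,inf), listed in increasing
order: T n is the (n+1)-th arrival time, i.e. the partial sum of n+1 independent
Exp(1) inter-arrival times.\<close>
definition poisson_points :: "'a measure \<Rightarrow> (nat \<Rightarrow> 'a \<Rightarrow> real) \<Rightarrow> bool" where
  "poisson_points M T \<longleftrightarrow>
     (\<exists>E. prob_space.indep_vars M (\<lambda>_. borel) E UNIV \<and>
          (\<forall>i. distributed M lborel (E i) (exponential_density 1)) \<and>
          (\<forall>n. \<forall>x\<in>space M. T n x = (\<Sum>i\<le>n. E i x)))"

end

theory Submission
  imports Defs "HOL-Real_Asymp.Real_Asymp"
begin


lemma key_identity:
  fixes h \<Psi> :: "real \<Rightarrow> real" and r B :: real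
  assumes h_nn: "\<And>t. 0 \<le> h t" and P_nn: "\<And>t. 0 \<le> \<Psi> t"
    and hm[measurable]: "h \<in> borel_measurable borel" and Pm[measurable]: "\<Psi> \<in> borel_measurable borel"
    and hc: "\<And>t. 0 < t \<Longrightarrow> isCont h t"
    and D: "\<And>t. 0 < t \<Longrightarrow> (\<Psi> has_real_derivative (1 - h t) * \<Psi> t) (at t)"
    and c0: "(\<Psi> \<longlongrightarrow> \<Psi> 0) (at_right 0)"
    and bnd: "\<And>t. \<Psi> t \<le> B"
    and r: "0 \<le> r"
  shows "(\<integral>\<^sup>+y. ennreal (exponential_density 1 y) * ennreal (h (r+y) * \<Psi> (r+y)) \<partial>lborel) = ennreal (\<Psi> r)"
proof -
  define f where "f t = exp (-t) * h t * \<Psi> t" for t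
  define F where "F t = - exp (-t) * \<Psi> t" for t
  have FD: "(F has_real_derivative f t) (at t)" if "ereal r < ereal t" for t
  proof -
    from that r have t: "0 < t" by simp
    show ?thesis unfolding F_def f_def
      by (rule derivative_eq_intros D[OF t] refl)+ (simp add: algebra_simps)
  qed
  have fc: "isCont f t" if "ereal r < ereal t" for t
  proof -
    from that r have t: "0 < t" by simp
    have "isCont \<Psi> t" using D[OF t] by (rule DERIV_isCont)
    then show ?thesis unfolding f_def using hc[OF t] by (intro continuous_intros)
  qed
  have Pr: "(\<Psi> \<longlongrightarrow> \<Psi> r) (at_right r)"
  proof (cases "r = 0")
    case True then show ?thesis using c0 by simp
  next
    case False
    then have "0 < r" using r by simp
    then have "isCont \<Psi> r" using D by (blast intro: DERIV_isCont)
    then show ?thesis by (simp add: isCont_def filterlim_at_split)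
  qed
  have Fr: "(F \<longlongrightarrow> F r) (at_right r)"
    unfolding F_def by (intro tendsto_intros Pr)
  have Finf: "(F \<longlongrightarrow> 0) at_top"
  proof -
    have e: "((\<lambda>t. exp (-t) * B) \<longlongrightarrow> 0) at_top"
      by real_asymp
    have "((\<lambda>t. exp (-t) * \<Psi> t) \<longlongrightarrow> 0) at_top"
    proof (rule tendsto_sandwich[OF _ _ tendsto_const e])
      show "\<forall>\<^sub>F t in at_top. 0 \<le> exp (- t) * \<Psi> t" using P_nn by simp
      show "\<forall>\<^sub>F t in at_top. exp (- t) * \<Psi> t \<le> exp (- t) * B" using bnd by simp
    qed
    then have "((\<lambda>t. - (exp (-t) * \<Psi> t)) \<longlongrightarrow> -0) at_top" by (rule tendsto_minus)
    then show ?thesis unfolding F_def by simp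
  qed
  have ftc: "set_integrable lborel (einterval (ereal r) \<infinity>) f"
            "(LBINT t=ereal r..\<infinity>. f t) = 0 - F r"
    using interval_integral_FTC_nonneg[where F=F and f=f and a="ereal r" and b=\<infinity> and A="F r" and B=0, OF _ FD fc]
    by (auto simp: ereal_tendsto_simps f_def h_nn P_nn Fr Finf)
  have "(\<integral>\<^sup>+y. ennreal (exponential_density 1 y) * ennreal (h (r+y) * \<Psi> (r+y)) \<partial>lborel)
      = (\<integral>\<^sup>+y. ennreal (indicator {0..} y * exp (-y) * h (r+y) * \<Psi> (r+y)) \<partial>lborel)"
    by (intro nn_integral_cong) (auto simp: ennreal_mult'[symmetric] h_nn P_nn indicator_def exponential_density_def)
  also have "\<dots> = (\<integral>\<^sup>+t. ennreal (indicator {r..} t * exp (-(t - r)) * h t * \<Psi> t) \<partial>lborel)"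
    by (subst nn_integral_real_affine[where c=1 and t=r]) (auto simp: indicator_def)
  also have "\<dots> = (\<integral>\<^sup>+t. ennreal (exp r) * ennreal (indicator {r<..} t * f t) \<partial>lborel)"
  proof (rule nn_integral_cong_AE)
    have "AE t in lborel. t \<noteq> r" by (rule AE_lborel_singleton)
    then show "AE t in lborel. ennreal (indicator {r..} t * exp (-(t - r)) * h t * \<Psi> t)
         = ennreal (exp r) * ennreal (indicator {r<..} t * f t)"
      by eventually_elim (auto simp: f_def indicator_def ennreal_mult'[symmetric] exp_diff exp_minus field_simps h_nn P_nn)
  qed
  also have "\<dots> = ennreal (exp r) * (\<integral>\<^sup>+t. ennreal (indicator {r<..} t * f t) \<partial>lborel)"
    by (rule nn_integral_cmult) (auto simp: f_def)
  also have "(\<integral>\<^sup>+t. ennreal (indicator {r<..} t * f t) \<partial>lborel) = ennreal (LBINT t=ereal r..\<infinity>. f t)"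
  proof -
    have "integrable lborel (\<lambda>t. indicator {r<..} t * f t)"
      using ftc(1) by (simp add: set_integrable_def)
    then show ?thesis
      by (subst nn_integral_eq_integral)
         (auto simp: interval_lebesgue_integral_def set_lebesgue_integral_def f_def h_nn P_nn indicator_def)
  qed
  also have "ennreal (exp r) * ennreal (LBINT t=ereal r..\<infinity>. f t) = ennreal (\<Psi> r)"
    by (simp add: ftc(2) F_def ennreal_mult'[symmetric] exp_minus field_simps)
  finally show ?thesis .
qed


locale pp = prob_space M for M :: "'a measure" +
  fixes E :: "nat \<Rightarrow> 'a \<Rightarrow> real"
  assumes ind: "indep_vars (\<lambda>_. borel) E UNIV"
    and dist: "\<And>i. distributed M lborel (E i) (exponential_density 1)"
begin

lemma E_meas[measurable]: "E i \<in> borel_measurable M"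
  using dist[of i] by (auto simp: distributed_def)

lemma split_last:
  fixes F :: "(nat \<Rightarrow> real) \<Rightarrow> real \<Rightarrow> ennreal"
  assumes Fm[measurable]: "(\<lambda>(\<omega>, y). F \<omega> y) \<in> borel_measurable (PiM {..<n} (\<lambda>_. borel) \<Otimes>\<^sub>M borel)"
  shows "(\<integral>\<^sup>+x. F (\<lambda>i\<in>{..<n}. E i x) (E n x) \<partial>M)
       = (\<integral>\<^sup>+x. (\<integral>\<^sup>+y. ennreal (exponential_density 1 y) * F (\<lambda>i\<in>{..<n}. E i x) y \<partial>lborel) \<partial>M)"
proof -
  let ?S = "PiM {..<n} (\<lambda>_. borel :: real measure)"
  define X where "X x = (\<lambda>i\<in>{..<n}. E i x)" for x
  have Xm[measurable]: "X \<in> measurable M ?S" unfolding X_def by measurable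
  let ?Z = "PiM {n} (\<lambda>_. borel :: real measure)"
  define Z where "Z x = (\<lambda>i\<in>{n}. E i x)" for x
  have Zm[measurable]: "Z \<in> measurable M ?Z" unfolding Z_def by measurable
  have iv: "indep_var ?S X ?Z Z"
    unfolding X_def Z_def by (rule indep_var_restrict[OF ind]) auto
  have Fm2[measurable]: "(\<lambda>(\<omega>, z). F \<omega> (z n)) \<in> borel_measurable (?S \<Otimes>\<^sub>M ?Z)"
  proof -
    have "(\<lambda>(\<omega>, z). (\<omega>, z n)) \<in> measurable (?S \<Otimes>\<^sub>M ?Z) (?S \<Otimes>\<^sub>M borel)"
      by measurable
    from measurable_comp[OF this Fm] show ?thesis by (simp add: comp_def case_prod_beta)
  qed
  have inner: "(\<integral>\<^sup>+z. F \<omega> (z n) \<partial>distr M ?Z Z) = (\<integral>\<^sup>+y. ennreal (exponential_density 1 y) * F \<omega> y \<partial>lborel)"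
    if "\<omega> \<in> space ?S" for \<omega>
  proof -
    have Fo[measurable]: "F \<omega> \<in> borel_measurable borel"
      using that by measurable
    have "(\<integral>\<^sup>+z. F \<omega> (z n) \<partial>distr M ?Z Z) = (\<integral>\<^sup>+x. F \<omega> (E n x) \<partial>M)"
      by (subst nn_integral_distr) (auto simp: Z_def)
    also have "\<dots> = (\<integral>\<^sup>+y. ennreal (exponential_density 1 y) * F \<omega> y \<partial>lborel)"
      by (rule distributed_nn_integral[OF dist, symmetric]) simp
    finally show ?thesis .
  qed
  have "(\<integral>\<^sup>+x. F (X x) (E n x) \<partial>M) = (\<integral>\<^sup>+x. (\<lambda>(\<omega>, z). F \<omega> (z n)) (X x, Z x) \<partial>M)"
    by (simp add: Z_def)
  also have "\<dots> = (\<integral>\<^sup>+p. (\<lambda>(\<omega>, z). F \<omega> (z n)) p \<partial>distr M (?S \<Otimes>\<^sub>M ?Z) (\<lambda>x. (X x, Z x)))"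
    by (subst nn_integral_distr) auto
  also have "distr M (?S \<Otimes>\<^sub>M ?Z) (\<lambda>x. (X x, Z x)) = distr M ?S X \<Otimes>\<^sub>M distr M ?Z Z"
    using iv by (simp add: indep_var_distribution_eq)
  also have "(\<integral>\<^sup>+p. (\<lambda>(\<omega>, z). F \<omega> (z n)) p \<partial>(distr M ?S X \<Otimes>\<^sub>M distr M ?Z Z))
      = (\<integral>\<^sup>+\<omega>. (\<integral>\<^sup>+z. F \<omega> (z n) \<partial>distr M ?Z Z) \<partial>distr M ?S X)"
  proof -
    interpret Y: sigma_finite_measure "distr M ?Z Z"
      by (rule prob_space_imp_sigma_finite, rule prob_space_distr) auto
    show ?thesis by (subst Y.nn_integral_fst[symmetric]) auto
  qed
  also have "\<dots> = (\<integral>\<^sup>+\<omega>. (\<integral>\<^sup>+y. ennreal (exponential_density 1 y) * F \<omega> y \<partial>lborel) \<partial>distr M ?S X)"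
    by (rule nn_integral_cong) (simp add: inner)
  also have "\<dots> = (\<integral>\<^sup>+x. (\<integral>\<^sup>+y. ennreal (exponential_density 1 y) * F (X x) y \<partial>lborel) \<partial>M)"
    by (subst nn_integral_distr) auto
  finally show ?thesis unfolding X_def .
qed

lemma AE_E_nonneg: "AE x in M. \<forall>i. 0 \<le> E i x"
proof -
  have "AE x in M. 0 \<le> E i x" for i
  proof -
    have "emeasure M (E i -` {..<0} \<inter> space M) = (\<integral>\<^sup>+x. ennreal (exponential_density 1 x) * indicator {..<0} x \<partial>lborel)"
      by (rule distributed_emeasure[OF dist]) simp
    also have "\<dots> = 0"
      by (intro nn_integral_zero') (auto simp: exponential_density_def indicator_def)
    finally have "emeasure M {x \<in> space M. E i x < 0} = 0"
      by (simp add: vimage_def Int_def conj_commute)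
    then show ?thesis
      by (intro AE_I[where N="{x \<in> space M. E i x < 0}"]) auto
  qed
  then show ?thesis by (simp add: AE_all_countable)
qed

lemma chain:
  fixes h \<Psi> :: "real \<Rightarrow> real"
  assumes h_nn: "\<And>t. 0 \<le> h t" and P_nn: "\<And>t. 0 \<le> \<Psi> t"
    and hm[measurable]: "h \<in> borel_measurable borel" and Pm[measurable]: "\<Psi> \<in> borel_measurable borel"
    and KEY: "\<And>r. 0 \<le> r \<Longrightarrow> (\<integral>\<^sup>+y. ennreal (exponential_density 1 y) * ennreal (h (r+y) * \<Psi> (r+y)) \<partial>lborel) = ennreal (\<Psi> r)"
  shows "(\<integral>\<^sup>+x. ennreal ((\<Prod>i<n. h (\<Sum>j<Suc i. E j x)) * \<Psi> (\<Sum>j<n. E j x)) \<partial>M) = ennreal (\<Psi> 0)"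
proof (induction n)
  case 0
  then show ?case by (simp add: emeasure_space_1)
next
  case (Suc n)
  define F where "F \<omega> y = ennreal ((\<Prod>i<n. h (\<Sum>j<Suc i. \<omega> j)) * h ((\<Sum>j<n. \<omega> j) + y) * \<Psi> ((\<Sum>j<n. \<omega> j) + y))"
    for \<omega> :: "nat \<Rightarrow> real" and y :: real
  have Fm: "(\<lambda>(\<omega>, y). F \<omega> y) \<in> borel_measurable (PiM {..<n} (\<lambda>_. borel) \<Otimes>\<^sub>M borel)"
  proof -
    have c: "(\<lambda>(\<omega>::nat\<Rightarrow>real, y::real). \<omega> j) \<in> borel_measurable (PiM {..<n} (\<lambda>_. borel) \<Otimes>\<^sub>M borel)" if "j < n" for j
    proof -
      have "(\<lambda>p. (\<lambda>\<omega>::nat\<Rightarrow>real. \<omega> j) (fst p)) \<in> borel_measurable (PiM {..<n} (\<lambda>_. borel) \<Otimes>\<^sub>M borel)"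
        by (rule measurable_compose[OF measurable_fst measurable_component_singleton]) (use that in auto)
      then show ?thesis by (simp add: case_prod_unfold)
    qed
    have s: "(\<lambda>(\<omega>::nat\<Rightarrow>real, y::real). \<Sum>j<k. \<omega> j) \<in> borel_measurable (PiM {..<n} (\<lambda>_. borel) \<Otimes>\<^sub>M borel)" if "k \<le> n" for k
    proof -
      have "(\<lambda>p. \<Sum>j<k. (\<lambda>(\<omega>::nat\<Rightarrow>real, y::real). \<omega> j) p) \<in> borel_measurable (PiM {..<n} (\<lambda>_. borel) \<Otimes>\<^sub>M borel)"
        using that by (intro borel_measurable_sum c) auto
      then show ?thesis by (simp add: case_prod_unfold)
    qed
    have p: "(\<lambda>p. \<Prod>i<n. h ((\<lambda>(\<omega>::nat\<Rightarrow>real, y::real). \<Sum>j<Suc i. \<omega> j) p)) \<in> borel_measurable (PiM {..<n} (\<lambda>_. borel) \<Otimes>\<^sub>M borel)"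
      by (intro borel_measurable_prod measurable_compose[OF s hm]) auto
    have y: "(\<lambda>(\<omega>::nat\<Rightarrow>real, y::real). y) \<in> borel_measurable (PiM {..<n} (\<lambda>_. borel) \<Otimes>\<^sub>M borel)"
      by measurable
    have q: "(\<lambda>p. (\<lambda>(\<omega>::nat\<Rightarrow>real, y::real). \<Sum>j<n. \<omega> j) p + (\<lambda>(\<omega>::nat\<Rightarrow>real, y::real). y) p) \<in> borel_measurable (PiM {..<n} (\<lambda>_. borel) \<Otimes>\<^sub>M borel)"
      by (intro borel_measurable_add s y) auto
    have "(\<lambda>p. ennreal ((\<Prod>i<n. h ((\<lambda>(\<omega>::nat\<Rightarrow>real, y::real). \<Sum>j<Suc i. \<omega> j) p)) * h ((\<lambda>(\<omega>::nat\<Rightarrow>real, y::real). \<Sum>j<n. \<omega> j) p + (\<lambda>(\<omega>::nat\<Rightarrow>real, y::real). y) p) * \<Psi> ((\<lambda>(\<omega>::nat\<Rightarrow>real, y::real). \<Sum>j<n. \<omega> j) p + (\<lambda>(\<omega>::nat\<Rightarrow>real, y::real). y) p)))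
       \<in> borel_measurable (PiM {..<n} (\<lambda>_. borel) \<Otimes>\<^sub>M borel)"
      by (intro measurable_compose[OF _ measurable_ennreal] borel_measurable_times p measurable_compose[OF q hm] measurable_compose[OF q Pm])
    then show ?thesis unfolding F_def by (simp add: case_prod_beta)
  qed
  have "(\<integral>\<^sup>+x. ennreal ((\<Prod>i<Suc n. h (\<Sum>j<Suc i. E j x)) * \<Psi> (\<Sum>j<Suc n. E j x)) \<partial>M)
      = (\<integral>\<^sup>+x. F (\<lambda>i\<in>{..<n}. E i x) (E n x) \<partial>M)"
    by (intro nn_integral_cong) (simp add: F_def mult.assoc)
  also have "\<dots> = (\<integral>\<^sup>+x. (\<integral>\<^sup>+y. ennreal (exponential_density 1 y) * F (\<lambda>i\<in>{..<n}. E i x) y \<partial>lborel) \<partial>M)"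
    by (rule split_last[OF Fm])
  also have "\<dots> = (\<integral>\<^sup>+x. ennreal ((\<Prod>i<n. h (\<Sum>j<Suc i. E j x)) * \<Psi> (\<Sum>j<n. E j x)) \<partial>M)"
  proof (rule nn_integral_cong_AE)
    show "AE x in M. (\<integral>\<^sup>+y. ennreal (exponential_density 1 y) * F (\<lambda>i\<in>{..<n}. E i x) y \<partial>lborel)
       = ennreal ((\<Prod>i<n. h (\<Sum>j<Suc i. E j x)) * \<Psi> (\<Sum>j<n. E j x))"
      using AE_E_nonneg
    proof eventually_elim
      case (elim x)
      define r where "r = (\<Sum>j<n. E j x)"
      define c where "c = (\<Prod>i<n. h (\<Sum>j<Suc i. E j x))"
      have r0: "0 \<le> r" unfolding r_def using elim by (intro sum_nonneg) auto
      have c0: "0 \<le> c" unfolding c_def using h_nn by (intro prod_nonneg) auto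
      have "(\<integral>\<^sup>+y. ennreal (exponential_density 1 y) * F (\<lambda>i\<in>{..<n}. E i x) y \<partial>lborel)
          = (\<integral>\<^sup>+y. ennreal c * (ennreal (exponential_density 1 y) * ennreal (h (r+y) * \<Psi> (r+y))) \<partial>lborel)"
        by (intro nn_integral_cong)
           (simp add: F_def c_def r_def ennreal_mult'[symmetric] h_nn P_nn c0 mult_ac prod_nonneg)
      also have "\<dots> = ennreal c * ennreal (\<Psi> r)"
        by (subst nn_integral_cmult) (auto simp: KEY[OF r0])
      also have "\<dots> = ennreal (c * \<Psi> r)" using c0 by (simp add: ennreal_mult')
      finally show ?case by (simp only: c_def r_def)
    qed
  qed
  also have "\<dots> = ennreal (\<Psi> 0)" by (rule Suc.IH)
  finally show ?case .
qed

end


locale tailfun =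
  fixes g :: "real \<Rightarrow> real" and C :: real
  assumes g_nn: "\<And>t. 0 \<le> g t" and g_le: "\<And>t. g t \<le> C"
    and g_neg: "\<And>t. t \<le> 0 \<Longrightarrow> g t = 0"
    and g_meas[measurable]: "g \<in> borel_measurable borel"
    and g_cont: "\<And>t. 0 < t \<Longrightarrow> isCont g t"
    and g_int: "integrable lborel g"
begin

definition G :: "real \<Rightarrow> real" where
  "G s = (LINT t|lborel. indicator {s..} t * g t)"

lemma int_ind: "integrable lborel (\<lambda>t. indicator A t * g t)" if "A \<in> sets borel"
proof -
  have "A \<in> sets lborel" using that by simp
  from integrable_real_mult_indicator[OF this g_int] show ?thesis by (simp add: mult.commute)
qed

lemma G_split:
  assumes "a \<le> u"
  shows "G a = (LBINT t=ereal a..ereal u. g t) + G u"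
proof -
  have "AE t in lborel. t \<noteq> a" by (rule AE_lborel_singleton)
  then have "(LINT t|lborel. indicator {a..} t * g t)
      = (LINT t|lborel. indicator {a<..<u} t * g t + indicator {u..} t * g t)"
    by (intro integral_cong_AE) (insert assms, auto elim!: eventually_mono simp: indicator_def)
  also have "\<dots> = (LINT t|lborel. indicator {a<..<u} t * g t) + (LINT t|lborel. indicator {u..} t * g t)"
    by (rule Bochner_Integration.integral_add; rule int_ind; simp)
  finally show ?thesis
    using assms by (simp add: G_def interval_lebesgue_integral_def set_lebesgue_integral_def)
qed

lemma G_nn: "0 \<le> G s"
  unfolding G_def by (intro integral_nonneg_AE) (auto simp: g_nn)

lemma G_le: "G s \<le> G 0" if "0 \<le> s"
proof -
  have "0 \<le> (LBINT t=ereal 0..ereal s. g t)"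
    using that by (auto simp: interval_lebesgue_integral_def set_lebesgue_integral_def g_nn intro!: integral_nonneg_AE)
  then show ?thesis using G_split[OF that] by simp
qed

lemma G_neg: "G s = G 0" if "s \<le> 0"
proof -
  have "(\<lambda>t. indicator {s..} t * g t) = (\<lambda>t. indicator {0..} t * g t)"
    using that g_neg by (auto simp: fun_eq_iff indicator_def)
  then show ?thesis by (simp add: G_def)
qed

lemma C_nn: "0 \<le> C" using g_nn[of 0] g_le[of 0] by simp

lemma LBINT_bounds:
  assumes "a \<le> u"
  shows "0 \<le> (LBINT t=ereal a..ereal u. g t)" "(LBINT t=ereal a..ereal u. g t) \<le> C * (u - a)"
proof -
  show "0 \<le> (LBINT t=ereal a..ereal u. g t)"
    using assms by (auto simp: interval_lebesgue_integral_def set_lebesgue_integral_def g_nn intro!: integral_nonneg_AE)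
  have ii: "integrable lborel (indicator {a<..<u} :: real \<Rightarrow> real)"
    by (rule integrable_real_indicator) (use assms in auto)
  have "(LINT t|lborel. indicator {a<..<u} t * g t) \<le> (LINT t|lborel. C * indicator {a<..<u} t)"
    by (intro integral_mono int_ind integrable_mult_right ii) (auto simp: indicator_def g_le)
  also have "\<dots> = C * (u - a)" using assms by simp
  finally show "(LBINT t=ereal a..ereal u. g t) \<le> C * (u - a)"
    using assms by (simp add: interval_lebesgue_integral_def set_lebesgue_integral_def)
qed

lemma G_lip: "\<bar>G x - G y\<bar> \<le> C * \<bar>x - y\<bar>"
proof -
  have *: "\<bar>G a - G u\<bar> \<le> C * \<bar>a - u\<bar>" if "a \<le> u" for a u
    using G_split[OF that] LBINT_bounds[OF that] that by simp
  show ?thesis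
    by (cases "x \<le> y") (use *[of x y] *[of y x] in \<open>auto simp: abs_minus_commute\<close>)
qed

lemma G_contin: "continuous_on UNIV G"
proof (rule lipschitz_on_continuous_on)
  show "C-lipschitz_on UNIV G"
    by (rule lipschitz_onI) (auto simp: dist_real_def G_lip C_nn)
qed

lemma G_isCont: "isCont G s"
  using G_contin by (simp add: continuous_on_eq_continuous_at)

lemma G_meas[measurable]: "G \<in> borel_measurable borel"
  using G_contin by (rule borel_measurable_continuous_onI)

lemma G_deriv:
  assumes s: "0 < s"
  shows "(G has_real_derivative - g s) (at s)"
proof -
  define a where "a = s / 2"
  define b where "b = 2 * s"
  have ab: "0 < a" "a < s" "s < b" using s by (auto simp: a_def b_def)
  have cont: "continuous_on {a..b} g"
    using ab by (intro continuous_at_imp_continuous_on ballI g_cont) auto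
  have "((\<lambda>u. LBINT y=a..u. g y) has_vector_derivative (g s)) (at s within {a..b})"
    by (rule interval_integral_FTC2[OF order_refl _ cont]) (use ab in auto)
  then have "((\<lambda>u. LBINT y=a..u. g y) has_real_derivative (g s)) (at s)"
    using ab by (simp add: has_real_derivative_iff_has_vector_derivative at_within_Icc_at)
  then have d: "((\<lambda>u. G a - (LBINT y=a..u. g y)) has_real_derivative - g s) (at s)"
    by (intro derivative_eq_intros) auto
  show ?thesis
  proof (rule has_field_derivative_transform_within_open[OF d, of "{a<..}"])
    fix u assume "u \<in> {a<..}"
    then show "G a - (LBINT y=a..u. g y) = G u" using G_split[of a u] by simp
  qed (use ab in auto)
qed

lemma G_top: "(G \<longlongrightarrow> 0) at_top"
proof -
  have int0: "set_integrable lborel {0..} g"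
  proof -
    have "integrable lborel (\<lambda>t. indicator {0..} t * g t)" by (rule int_ind) (rule atLeast_borel)
    then show ?thesis unfolding set_integrable_def by (simp add: mult.commute)
  qed
  have lim: "((\<lambda>b. set_lebesgue_integral lborel {0..b} g) \<longlongrightarrow> set_lebesgue_integral lborel {0..} g) at_top"
    by (rule tendsto_set_lebesgue_integral_at_top[OF _ int0]) simp
  have eq: "G b = G 0 - set_lebesgue_integral lborel {0..b} g" if "0 \<le> b" for b
  proof -
    have "AE t in lborel. t \<noteq> b" by (rule AE_lborel_singleton)
    then have ae: "AE t in lborel. indicator {0..b} t *\<^sub>R g t = indicator {0<..<b} t *\<^sub>R g t"
    proof (rule eventually_mono)
      fix t assume "t \<noteq> b"
      then show "indicator {0..b} t *\<^sub>R g t = indicator {0<..<b} t *\<^sub>R g t"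
        by (cases "t = 0") (auto simp: indicator_def g_neg[of 0, simplified])
    qed
    have "set_lebesgue_integral lborel {0..b} g = set_lebesgue_integral lborel {0<..<b} g"
      unfolding set_lebesgue_integral_def by (rule integral_cong_AE[OF _ _ ae]) measurable
    also have "\<dots> = (LBINT t=ereal 0..ereal b. g t)"
      using that by (simp add: interval_lebesgue_integral_def)
    finally have "set_lebesgue_integral lborel {0..b} g = (LBINT t=ereal 0..ereal b. g t)" .
    then show ?thesis using G_split[OF that] by simp
  qed
  have "G 0 = set_lebesgue_integral lborel {0..} g"
    unfolding G_def set_lebesgue_integral_def by (simp add: mult.commute)
  have "((\<lambda>b. G 0 - set_lebesgue_integral lborel {0..b} g) \<longlongrightarrow> G 0 - set_lebesgue_integral lborel {0..} g) at_top"
    by (rule tendsto_diff[OF tendsto_const lim])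
  then have "((\<lambda>b. G 0 - set_lebesgue_integral lborel {0..b} g) \<longlongrightarrow> 0) at_top"
    unfolding \<open>G 0 = set_lebesgue_integral lborel {0..} g\<close> diff_self .
  then show ?thesis
  proof (rule Lim_transform_eventually)
    show "\<forall>\<^sub>F b in at_top. G 0 - set_lebesgue_integral lborel {0..b} g = G b"
      unfolding eventually_at_top_linorder by (intro exI[of _ 0] allI impI) (rule eq[symmetric])
  qed
qed

end


context pp
begin

lemma caseA:
  assumes tf: "tailfun g C" and g1: "\<And>t. g t \<le> 1"
  shows "(\<integral>\<^sup>+x. ennreal ((\<Prod>i<n. (1 - g (\<Sum>j<Suc i. E j x))) * exp (- tailfun.G g (\<Sum>j<n. E j x))) \<partial>M)
         = ennreal (exp (- tailfun.G g 0))"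
proof -
  interpret tailfun g C by (rule tf)
  let ?h = "\<lambda>t. 1 - g t" and ?P = "\<lambda>t. exp (- G t)"
  have key: "(\<integral>\<^sup>+y. ennreal (exponential_density 1 y) * ennreal (?h (r+y) * ?P (r+y)) \<partial>lborel) = ennreal (?P r)"
    if "0 \<le> r" for r
  proof (rule key_identity[where B=1])
    show "isCont ?h t" if "0 < t" for t using g_cont[OF that] by (intro continuous_intros)
    show "(?P has_real_derivative (1 - ?h t) * ?P t) (at t)" if "0 < t" for t
      by (rule derivative_eq_intros G_deriv[OF that] refl)+ simp
    show "(?P \<longlongrightarrow> ?P 0) (at_right 0)"
      using G_isCont[of 0] by (intro tendsto_intros) (simp add: isCont_def filterlim_at_split)
    show "?P t \<le> 1" for t using G_nn[of t] by simp
  qed (use that g1 in auto)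
  show ?thesis
    by (rule chain[where h="?h" and \<Psi>="?P", OF _ _ _ _ key]) (use g1 in auto)
qed

lemma caseB:
  assumes tf: "tailfun g C"
  shows "(\<integral>\<^sup>+x. ennreal ((\<Prod>i<n. (1 + g (\<Sum>j<Suc i. E j x))) * exp (tailfun.G g (\<Sum>j<n. E j x))) \<partial>M)
         = ennreal (exp (tailfun.G g 0))"
proof -
  interpret tailfun g C by (rule tf)
  let ?h = "\<lambda>t. 1 + g t" and ?P = "\<lambda>t. exp (G t)"
  have Gb: "G t \<le> G 0" for t
  proof (cases "0 \<le> t")
    case True then show ?thesis by (rule G_le)
  next
    case False then have "G t = G 0" by (intro G_neg) simp
    then show ?thesis by simp
  qed
  have key: "(\<integral>\<^sup>+y. ennreal (exponential_density 1 y) * ennreal (?h (r+y) * ?P (r+y)) \<partial>lborel) = ennreal (?P r)"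
    if "0 \<le> r" for r
  proof (rule key_identity[where B="exp (G 0)"])
    show "isCont ?h t" if "0 < t" for t using g_cont[OF that] by (intro continuous_intros)
    show "(?P has_real_derivative (1 - ?h t) * ?P t) (at t)" if "0 < t" for t
      by (rule derivative_eq_intros G_deriv[OF that] refl)+ simp
    show "(?P \<longlongrightarrow> ?P 0) (at_right 0)"
      using G_isCont[of 0] by (intro tendsto_intros) (simp add: isCont_def filterlim_at_split)
    show "?P t \<le> exp (G 0)" for t using Gb[of t] by simp
    show "0 \<le> ?h t" for t using g_nn[of t] by simp
  qed (use that in auto)
  have hnn: "0 \<le> ?h t" for t using g_nn[of t] by simp
  show ?thesis
    by (rule chain[where h="?h" and \<Psi>="?P", OF hnn _ _ _ key]) auto
qed

lemma geo:
  "(\<integral>\<^sup>+x. ennreal (2 ^ n * exp (- max (\<Sum>j<n. E j x) 0)) \<partial>M) = 1"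
proof -
  let ?h = "\<lambda>t::real. 2::real" and ?P = "\<lambda>t::real. exp (- max t 0)"
  have key: "(\<integral>\<^sup>+y. ennreal (exponential_density 1 y) * ennreal (?h (r+y) * ?P (r+y)) \<partial>lborel) = ennreal (?P r)"
    if "0 \<le> r" for r
  proof (rule key_identity[where B=1])
    show "(?P has_real_derivative (1 - ?h t) * ?P t) (at t)" if "0 < t" for t
    proof -
      have "((\<lambda>t. exp (- t)) has_real_derivative (1 - ?h t) * ?P t) (at t)"
        using that by (auto intro!: derivative_eq_intros)
      then show ?thesis
        by (rule has_field_derivative_transform_within_open[where S="{0<..}"]) (use that in auto)
    qed
    show "(?P \<longlongrightarrow> ?P 0) (at_right 0)"
      by (intro tendsto_intros tendsto_ident_at)
  qed (use that in \<open>auto simp: continuous_on_def\<close>)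
  have "(\<integral>\<^sup>+x. ennreal ((\<Prod>i<n. ?h (\<Sum>j<Suc i. E j x)) * ?P (\<Sum>j<n. E j x)) \<partial>M) = ennreal (?P 0)"
    by (rule chain[where h="?h" and \<Psi>="?P", OF _ _ _ _ key]) auto
  then show ?thesis by simp
qed

lemma AE_U_nonneg: "AE x in M. \<forall>n. 0 \<le> (\<Sum>j<n. E j x)"
  using AE_E_nonneg by eventually_elim (auto intro: sum_nonneg)

lemma tail_prob:
  "(\<integral>x. indicator {x\<in>space M. (\<Sum>j<n. E j x) < R} x \<partial>M) \<le> exp R / 2 ^ n"
proof -
  have m: "(\<lambda>x. 2 ^ n * exp (- max (\<Sum>j<n. E j x) 0)) \<in> borel_measurable M" by measurable
  have int: "integrable M (\<lambda>x. 2 ^ n * exp (- max (\<Sum>j<n. E j x) 0))"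
  proof (rule integrable_const_bound[where B="2^n"])
    show "AE x in M. norm (2 ^ n * exp (- max (\<Sum>j<n. E j x) 0)) \<le> (2::real) ^ n"
      by (intro AE_I2) (auto simp: mult_le_cancel_left1)
  qed (rule m)
  have "(\<integral>\<^sup>+x. ennreal (2 ^ n * exp (- max (\<Sum>j<n. E j x) 0)) \<partial>M) = ennreal (\<integral>x. 2 ^ n * exp (- max (\<Sum>j<n. E j x) 0) \<partial>M)"
    by (rule nn_integral_eq_integral[OF int]) simp
  then have "ennreal (\<integral>x. 2 ^ n * exp (- max (\<Sum>j<n. E j x) 0) \<partial>M) = 1"
    using geo[of n] by simp
  then have one: "(\<integral>x. 2 ^ n * exp (- max (\<Sum>j<n. E j x) 0) \<partial>M) = 1"
    by (metis ennreal_1 ennreal_inj integral_nonneg_AE AE_I2 zero_le_one exp_ge_zero mult_nonneg_nonneg zero_le_power zero_le_numeral)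
  have "(\<integral>x. indicator {x\<in>space M. (\<Sum>j<n. E j x) < R} x \<partial>M)
      \<le> (\<integral>x. (exp R / 2 ^ n) * (2 ^ n * exp (- max (\<Sum>j<n. E j x) 0)) \<partial>M)"
  proof (rule integral_mono_AE)
    show "integrable M (\<lambda>x. indicator {x\<in>space M. (\<Sum>j<n. E j x) < R} x :: real)"
      by (rule integrable_real_indicator) (auto simp: less_top[symmetric])
    show "integrable M (\<lambda>x. (exp R / 2 ^ n) * (2 ^ n * exp (- max (\<Sum>j<n. E j x) 0)))"
      by (intro integrable_mult_right int)
    show "AE x in M. indicator {x\<in>space M. (\<Sum>j<n. E j x) < R} x \<le> (exp R / 2 ^ n) * (2 ^ n * exp (- max (\<Sum>j<n. E j x) 0))"
      using AE_U_nonneg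
    proof eventually_elim
      case (elim x)
      then have s0: "0 \<le> (\<Sum>j<n. E j x)" by auto
      have "(\<Sum>j<n. E j x) < R \<Longrightarrow> 1 \<le> exp R * exp (- max (\<Sum>j<n. E j x) 0)"
      proof -
        assume "(\<Sum>j<n. E j x) < R"
        then have "1 \<le> exp (R - (\<Sum>j<n. E j x))" by simp
        moreover have "exp R * exp (- max (\<Sum>j<n. E j x) 0) = exp (R - (\<Sum>j<n. E j x))"
          using s0 by (simp add: exp_diff exp_minus field_simps)
        ultimately show ?thesis by simp
      qed
      then show ?case
        by (auto simp: indicator_def)
    qed
  qed
  also have "\<dots> = exp R / 2 ^ n"
    using one by (simp add: field_simps)
  finally show ?thesis .
qed

lemma nn_to_int:
  fixes f :: "'a \<Rightarrow> real"
  assumes [measurable]: "f \<in> borel_measurable M" and f0: "\<And>x. 0 \<le> f x" and fB: "\<And>x. f x \<le> B"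
    and eq: "(\<integral>\<^sup>+x. ennreal (f x) \<partial>M) = ennreal r" and r: "0 \<le> r"
  shows "(\<integral>x. f x \<partial>M) = r" "integrable M f"
proof -
  show int: "integrable M f"
    by (rule integrable_const_bound[where B=B]) (auto simp: f0 fB abs_of_nonneg)
  have "ennreal (\<integral>x. f x \<partial>M) = ennreal r"
    using nn_integral_eq_integral[OF int] eq f0 by simp
  then show "(\<integral>x. f x \<partial>M) = r"
    using r integral_nonneg_AE[of f M] f0 by simp
qed

lemma limA:
  assumes tf: "tailfun g C" and g1: "\<And>t. g t \<le> 1"
  shows "(\<lambda>n. \<integral>x. (\<Prod>i<n. (1 - g (\<Sum>j<Suc i. E j x))) \<partial>M) \<longlonglongrightarrow> exp (- tailfun.G g 0)"
proof -
  interpret tailfun g C by (rule tf)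
  define P where "P n x = (\<Prod>i<n. (1 - g (\<Sum>j<Suc i. E j x)))" for n x
  define \<Psi> where "\<Psi> t = exp (- G t)" for t
  have Pm[measurable]: "P n \<in> borel_measurable M" for n unfolding P_def by measurable
  have P01: "0 \<le> P n x" "P n x \<le> 1" for n x
    unfolding P_def using g1 g_nn by (auto intro: prod_nonneg prod_le_1)
  have Psi01: "0 \<le> \<Psi> t" "\<Psi> t \<le> 1" for t unfolding \<Psi>_def using G_nn[of t] by auto
  have Gmono: "G u \<le> G a" if "a \<le> u" for a u
    using G_split[OF that] LBINT_bounds(1)[OF that] by simp
  have intP: "integrable M (P n)" for n
    by (rule integrable_const_bound[where B=1]) (auto simp: P01 abs_of_nonneg)
  have eq: "(\<integral>x. P n x * \<Psi> (\<Sum>j<n. E j x) \<partial>M) = \<Psi> 0" for n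
  proof (rule nn_to_int(1)[where B=1])
    show "(\<integral>\<^sup>+x. ennreal (P n x * \<Psi> (\<Sum>j<n. E j x)) \<partial>M) = ennreal (\<Psi> 0)"
      using caseA[OF tf g1, of n] unfolding P_def \<Psi>_def .
    show "P n x * \<Psi> (\<Sum>j<n. E j x) \<le> 1" for x using P01[of n x] Psi01 by (intro mult_le_one) auto
  qed (auto simp: \<Psi>_def P01 Psi01)
  have Psim[measurable]: "\<Psi> \<in> borel_measurable borel" unfolding \<Psi>_def by measurable
  have PPb: "\<bar>P n x * \<Psi> t\<bar> \<le> 1" for n x t
    using P01[of n x] Psi01[of t] by (simp add: abs_of_nonneg mult_le_one)
  have intPP: "integrable M (\<lambda>x. P n x * \<Psi> (\<Sum>j<n. E j x))" for n
    by (rule integrable_const_bound[where B=1]) (auto simp: PPb)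
  have lower: "\<Psi> 0 \<le> (\<integral>x. P n x \<partial>M)" for n
    unfolding eq[of n, symmetric]
    by (intro integral_mono intPP intP) (auto intro: mult_left_le P01 Psi01)
  have upper: "(\<integral>x. P n x \<partial>M) \<le> \<Psi> 0 + (G R + exp R / 2 ^ n)" for n R
  proof -
    let ?I = "\<lambda>x. indicator {x\<in>space M. (\<Sum>j<n. E j x) < R} x :: real"
    have intI: "integrable M ?I"
      by (rule integrable_real_indicator) (auto simp: less_top[symmetric])
    have "(\<integral>x. P n x \<partial>M) = (\<integral>x. P n x * \<Psi> (\<Sum>j<n. E j x) + P n x * (1 - \<Psi> (\<Sum>j<n. E j x)) \<partial>M)"
      by (simp add: algebra_simps)
    also have "\<dots> = \<Psi> 0 + (\<integral>x. P n x * (1 - \<Psi> (\<Sum>j<n. E j x)) \<partial>M)"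
      by (subst Bochner_Integration.integral_add)
         (auto simp: eq intro!: intPP integrable_const_bound[where B=1] simp: abs_of_nonneg P01 Psi01 mult_le_one)
    also have "(\<integral>x. P n x * (1 - \<Psi> (\<Sum>j<n. E j x)) \<partial>M) \<le> (\<integral>x. G R + ?I x \<partial>M)"
    proof (rule integral_mono_AE)
      show "integrable M (\<lambda>x. P n x * (1 - \<Psi> (\<Sum>j<n. E j x)))"
        by (rule integrable_const_bound[where B=1]) (auto simp: abs_of_nonneg P01 Psi01 mult_le_one)
      show "integrable M (\<lambda>x. G R + ?I x)" by (intro Bochner_Integration.integrable_add intI) auto
      show "AE x in M. P n x * (1 - \<Psi> (\<Sum>j<n. E j x)) \<le> G R + ?I x"
        using AE_U_nonneg AE_space
      proof eventually_elim
        case (elim x)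
        define u where "u = (\<Sum>j<n. E j x)"
        have a: "P n x * (1 - \<Psi> u) \<le> 1 - \<Psi> u"
          using P01[of n x] Psi01[of u] by (intro mult_left_le_one_le) auto
        have b: "1 - \<Psi> u \<le> G u"
          using exp_ge_add_one_self[of "- G u"] unfolding \<Psi>_def by simp
        show ?case
        proof (cases "u < R")
          case True
          then have "?I x = 1" using elim by (simp add: u_def indicator_def)
          then show ?thesis using a Psi01[of u] G_nn[of R] by (simp add: u_def)
        next
          case False
          then show ?thesis using a b Gmono[of R u] by (simp add: u_def indicator_def)
        qed
      qed
    qed
    also have "(\<integral>x. G R + ?I x \<partial>M) = G R + (\<integral>x. ?I x \<partial>M)"
      by (subst Bochner_Integration.integral_add) (auto intro: intI simp: prob_space)
    also have "\<dots> \<le> G R + exp R / 2 ^ n" using tail_prob[of n R] by simp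
    finally show ?thesis by simp
  qed
  show ?thesis
  proof (rule LIMSEQ_I)
    fix r :: real assume r: "0 < r"
    have "\<forall>\<^sub>F R in at_top. G R < r / 2"
      using G_top r by (intro order_tendstoD) auto
    then obtain R where R: "G R < r / 2"
      by (auto simp: eventually_at_top_linorder)
    have "(\<lambda>n. exp R / 2 ^ n) \<longlonglongrightarrow> 0"
      by (intro LIMSEQ_divide_realpow_zero) auto
    then have "\<forall>\<^sub>F n in sequentially. exp R / 2 ^ n < r / 2"
      using r by (intro order_tendstoD) auto
    then obtain N where N: "\<And>n. n \<ge> N \<Longrightarrow> exp R / 2 ^ n < r / 2"
      by (auto simp: eventually_sequentially)
    show "\<exists>no. \<forall>n\<ge>no. norm ((\<integral>x. (\<Prod>i<n. (1 - g (\<Sum>j<Suc i. E j x))) \<partial>M) - exp (- G 0)) < r"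
    proof (intro exI allI impI)
      fix n assume "N \<le> n"
      then have n1: "exp R / 2 ^ n < r / 2" by (rule N)
      have "\<bar>(\<integral>x. P n x \<partial>M) - \<Psi> 0\<bar> < r"
        using n1 R lower[of n] upper[of n R] by linarith
      then show "norm ((\<integral>x. (\<Prod>i<n. (1 - g (\<Sum>j<Suc i. E j x))) \<partial>M) - exp (- G 0)) < r"
        unfolding P_def \<Psi>_def by simp
    qed
  qed
qed

end


lemma one_minus_exp_as_integral:
  assumes "0 \<le> y"
  shows "ennreal (1 - exp (- y)) = (\<integral>\<^sup>+z. ennreal (exponential_density 1 z) * indicator {..y} z \<partial>lborel)"
  using nn_integral_erlang_density[of 1 0 y] assms by (simp add: erlang_CDF_def)

lemma powr_region:
  fixes t z w \<alpha> :: real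
  assumes "0 < t" "0 < z" "0 < w" "0 < \<alpha>"
  shows "z \<le> w * t powr (-\<alpha>) \<longleftrightarrow> t \<le> (w / z) powr (1 / \<alpha>)"
proof -
  have "z \<le> w * t powr (-\<alpha>) \<longleftrightarrow> t powr \<alpha> \<le> w / z"
    using assms by (simp add: powr_minus field_simps)
  also have "\<dots> \<longleftrightarrow> (t powr \<alpha>) powr (1/\<alpha>) \<le> (w / z) powr (1 / \<alpha>)"
  proof
    assume "t powr \<alpha> \<le> w / z"
    then show "(t powr \<alpha>) powr (1/\<alpha>) \<le> (w / z) powr (1 / \<alpha>)"
      using assms by (intro powr_mono2) auto
  next
    assume h: "(t powr \<alpha>) powr (1/\<alpha>) \<le> (w / z) powr (1 / \<alpha>)"
    have "((t powr \<alpha>) powr (1/\<alpha>)) powr \<alpha> \<le> ((w / z) powr (1 / \<alpha>)) powr \<alpha>"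
      by (rule powr_mono2[OF _ _ h]) (use assms in auto)
    moreover have "((t powr \<alpha>) powr (1/\<alpha>)) powr \<alpha> = t powr \<alpha>"
      using assms by (simp add: powr_powr)
    moreover have "((w / z) powr (1 / \<alpha>)) powr \<alpha> = w / z"
      using assms by (simp add: powr_powr)
    ultimately show "t powr \<alpha> \<le> w / z" by simp
  qed
  also have "(t powr \<alpha>) powr (1/\<alpha>) = t"
    using assms by (simp add: powr_powr)
  finally show ?thesis .
qed

lemma gamma_tail_integral:
  fixes w \<alpha> :: real
  assumes w: "0 < w" and a: "1 < \<alpha>"
  shows "(\<integral>\<^sup>+t. ennreal (if t \<le> 0 then 0 else 1 - exp (- w * t powr (-\<alpha>))) \<partial>lborel)
       = ennreal (w powr (1/\<alpha>) * Gamma (1 - 1/\<alpha>))"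
proof -
  let ?d = "\<lambda>z. ennreal (exponential_density 1 z)"
  have "(\<integral>\<^sup>+t. ennreal (if t \<le> 0 then 0 else 1 - exp (- w * t powr (-\<alpha>))) \<partial>lborel)
      = (\<integral>\<^sup>+t. (\<integral>\<^sup>+z. ennreal (if 0 < t \<and> z \<le> w * t powr (-\<alpha>) then exponential_density 1 z else 0) \<partial>lborel) \<partial>lborel)"
  proof (rule nn_integral_cong)
    fix t :: real
    show "ennreal (if t \<le> 0 then 0 else 1 - exp (- w * t powr (-\<alpha>)))
      = (\<integral>\<^sup>+z. ennreal (if 0 < t \<and> z \<le> w * t powr (-\<alpha>) then exponential_density 1 z else 0) \<partial>lborel)"
    proof (cases "t \<le> 0")
      case True then show ?thesis by simp
    next
      case False
      then have "ennreal (1 - exp (- (w * t powr (-\<alpha>)))) = (\<integral>\<^sup>+z. ?d z * indicator {..w * t powr (-\<alpha>)} z \<partial>lborel)"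
        using w by (intro one_minus_exp_as_integral) simp
      also have "\<dots> = (\<integral>\<^sup>+z. ennreal (if 0 < t \<and> z \<le> w * t powr (-\<alpha>) then exponential_density 1 z else 0) \<partial>lborel)"
        using False by (intro nn_integral_cong) (auto simp: indicator_def)
      finally show ?thesis using False by simp
    qed
  qed
  also have "\<dots> = (\<integral>\<^sup>+z. (\<integral>\<^sup>+t. ennreal (if 0 < t \<and> z \<le> w * t powr (-\<alpha>) then exponential_density 1 z else 0) \<partial>lborel) \<partial>lborel)"
    by (rule lborel_pair.Fubini'[symmetric]) measurable
  also have "\<dots> = (\<integral>\<^sup>+z. ennreal (indicator {0..} z * w powr (1/\<alpha>) * z powr (1 - 1/\<alpha> - 1) / exp z) \<partial>lborel)"
  proof (rule nn_integral_cong_AE)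
    show "AE z in lborel. (\<integral>\<^sup>+t. ennreal (if 0 < t \<and> z \<le> w * t powr (-\<alpha>) then exponential_density 1 z else 0) \<partial>lborel)
        = ennreal (indicator {0..} z * w powr (1/\<alpha>) * z powr (1 - 1/\<alpha> - 1) / exp z)"
      using AE_lborel_singleton[of 0]
    proof eventually_elim
      case (elim z)
      show ?case
      proof (cases "z < 0")
        case True
        then have "exponential_density 1 z = 0" by (simp add: exponential_density_def)
        then have "(\<lambda>t. ennreal (if 0 < t \<and> z \<le> w * t powr (-\<alpha>) then exponential_density 1 z else 0)) = (\<lambda>t. 0)"
          by auto
        then show ?thesis using True by simp
      next
        case False
        with elim have z: "0 < z" by simp
        have "(\<integral>\<^sup>+t. ennreal (if 0 < t \<and> z \<le> w * t powr (-\<alpha>) then exponential_density 1 z else 0) \<partial>lborel)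
            = (\<integral>\<^sup>+t. ennreal (exp (- z)) * indicator {0<..(w / z) powr (1 / \<alpha>)} t \<partial>lborel)"
          using z w a by (intro nn_integral_cong) (auto simp: indicator_def powr_region exponential_density_def)
        also have "\<dots> = ennreal (exp (- z)) * ennreal ((w / z) powr (1 / \<alpha>))"
          by (subst nn_integral_cmult_indicator) auto
        also have "\<dots> = ennreal (indicator {0..} z * w powr (1/\<alpha>) * z powr (1 - 1/\<alpha> - 1) / exp z)"
          using z w by (simp add: ennreal_mult'[symmetric] powr_divide powr_minus exp_minus field_simps)
        finally show ?thesis .
      qed
    qed
  qed
  also have "\<dots> = ennreal (w powr (1/\<alpha>)) * (\<integral>\<^sup>+z. ennreal (indicator {0..} z * z powr (1 - 1/\<alpha> - 1) / exp z) \<partial>lborel)"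
    by (subst nn_integral_cmult[symmetric]) (auto intro!: nn_integral_cong simp: ennreal_mult'[symmetric] indicator_def)
  also have "(\<integral>\<^sup>+z. ennreal (indicator {0..} z * z powr (1 - 1/\<alpha> - 1) / exp z) \<partial>lborel) = Gamma (1 - 1/\<alpha>)"
    using a by (subst Gamma_conv_nn_integral_real) (auto simp: field_simps)
  finally show ?thesis using w by (simp add: ennreal_mult')
qed

lemma tailfun_from_nn:
  fixes g :: "real \<Rightarrow> real"
  assumes nn: "\<And>t. 0 \<le> g t" and le: "\<And>t. g t \<le> C" and neg: "\<And>t. t \<le> 0 \<Longrightarrow> g t = 0"
    and m[measurable]: "g \<in> borel_measurable borel" and c: "\<And>t. 0 < t \<Longrightarrow> isCont g t"
    and V: "(\<integral>\<^sup>+t. ennreal (g t) \<partial>lborel) = ennreal V" and V0: "0 \<le> V"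
  shows "tailfun g C" "tailfun.G g 0 = V"
proof -
  have int: "integrable lborel g"
    by (rule integrableI_nonneg) (auto simp: nn V)
  show tf: "tailfun g C"
    by unfold_locales (auto simp: nn le neg c int)
  have "(\<lambda>t. indicator {0..} t * g t) = g"
    by (auto simp: fun_eq_iff indicator_def neg)
  then have "tailfun.G g 0 = (LINT t|lborel. g t)"
    by (simp add: tailfun.G_def[OF tf])
  also have "ennreal (LINT t|lborel. g t) = ennreal V"
    using nn_integral_eq_integral[OF int] V nn by simp
  then have "(LINT t|lborel. g t) = V"
    using V0 integral_nonneg_AE[of g lborel] nn by simp
  finally show "tailfun.G g 0 = V" .
qed

definition gA :: "real \<Rightarrow> real \<Rightarrow> real \<Rightarrow> real" where
  "gA w \<alpha> t = (if t \<le> 0 then 0 else 1 - exp (- w * t powr (-\<alpha>)))"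

lemma gA_props:
  assumes w: "0 < w" and a: "1 < \<alpha>"
  shows "tailfun (gA w \<alpha>) 1" "tailfun.G (gA w \<alpha>) 0 = w powr (1/\<alpha>) * Gamma (1 - 1/\<alpha>)"
    "\<And>t. gA w \<alpha> t \<le> 1" "\<And>t. 0 \<le> t \<Longrightarrow> 1 - gA w \<alpha> t = exp (- w * t powr (-\<alpha>))"
proof -
  have nn: "0 \<le> gA w \<alpha> t" for t
    using w by (auto simp: gA_def)
  have le: "gA w \<alpha> t \<le> 1" for t by (auto simp: gA_def)
  have c: "isCont (gA w \<alpha>) t" if "0 < t" for t
  proof -
    have ev: "eventually (\<lambda>x. gA w \<alpha> x = 1 - exp (- w * x powr (-\<alpha>))) (nhds t)"
      using eventually_nhds_in_open[of "{0<..}" t] that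
      by (auto elim!: eventually_mono simp: gA_def)
    have "isCont (\<lambda>x. 1 - exp (- w * x powr (-\<alpha>))) t"
      using that by (intro continuous_intros) auto
    then show ?thesis using isCont_cong[OF ev] by simp
  qed
  have G0: "0 \<le> w powr (1/\<alpha>) * Gamma (1 - 1/\<alpha>)"
    using a by (intro mult_nonneg_nonneg) (auto intro: less_imp_le Gamma_real_pos simp: field_simps)
  have V: "(\<integral>\<^sup>+t. ennreal (gA w \<alpha> t) \<partial>lborel) = ennreal (w powr (1/\<alpha>) * Gamma (1 - 1/\<alpha>))"
    using gamma_tail_integral[OF w a] unfolding gA_def .
  have m: "gA w \<alpha> \<in> borel_measurable borel" unfolding gA_def[abs_def] by measurable
  show "tailfun (gA w \<alpha>) 1" "tailfun.G (gA w \<alpha>) 0 = w powr (1/\<alpha>) * Gamma (1 - 1/\<alpha>)"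
    by (rule tailfun_from_nn[OF nn le _ m c V G0]; simp add: gA_def)+
  show "\<And>t. gA w \<alpha> t \<le> 1" by (rule le)
  show "\<And>t. 0 \<le> t \<Longrightarrow> 1 - gA w \<alpha> t = exp (- w * t powr (-\<alpha>))"
    by (auto simp: gA_def)
qed


lemma exp_partial_lim:
  fixes a :: "nat \<Rightarrow> real" and w :: real
  assumes a0: "\<And>i. 0 \<le> a i" and w: "0 < w"
  shows "(\<lambda>n. exp (- w * (\<Sum>i<n. a i))) \<longlonglongrightarrow> (if summable a then exp (- w * suminf a) else 0)"
proof (cases "summable a")
  case True
  then show ?thesis by (simp add: summable_LIMSEQ tendsto_intros)
next
  case False
  have inc: "(\<Sum>i<m. a i) \<le> (\<Sum>i<n. a i)" if "m \<le> n" for m n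
    using that a0 by (intro sum_mono2) auto
  have unb: "\<exists>n. B < (\<Sum>i<n. a i)" for B
  proof (rule ccontr)
    assume "\<not> ?thesis"
    then have "\<And>n. (\<Sum>i<n. a i) \<le> B" by (auto simp: not_less)
    then have "summable a" by (intro summableI_nonneg_bounded[of a B]) (auto simp: a0)
    with False show False by simp
  qed
  have lim: "filterlim (\<lambda>n. \<Sum>i<n. a i) at_top sequentially"
  proof (subst filterlim_at_top, intro allI)
    fix B
    obtain N where "B < (\<Sum>i<N. a i)" using unb by blast
    then show "eventually (\<lambda>n. B \<le> (\<Sum>i<n. a i)) sequentially"
      unfolding eventually_sequentially by (intro exI[of _ N] allI impI) (use inc in force)
  qed
  have "((\<lambda>x. exp (- w * x)) \<longlongrightarrow> 0) at_top"
    using w by real_asymp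
  from filterlim_compose[OF this lim] False show ?thesis by simp
qed

context pp
begin

definition Sfun :: "real \<Rightarrow> 'a \<Rightarrow> real" where
  "Sfun \<alpha> x = (\<Sum>i. (\<Sum>j<Suc i. E j x) powr (-\<alpha>))"

definition Qfun :: "real \<Rightarrow> real \<Rightarrow> 'a \<Rightarrow> real" where
  "Qfun \<alpha> w x = lim (\<lambda>n. exp (- w * (\<Sum>i<n. (\<Sum>j<Suc i. E j x) powr (-\<alpha>))))"

lemma Qfun_eq:
  assumes "0 < w"
  shows "Qfun \<alpha> w x = (if summable (\<lambda>i. (\<Sum>j<Suc i. E j x) powr (-\<alpha>)) then exp (- w * Sfun \<alpha> x) else 0)"
  unfolding Qfun_def Sfun_def by (rule limI, rule exp_partial_lim) (auto simp: assms)

lemma Qfun_meas[measurable]: "Qfun \<alpha> w \<in> borel_measurable M"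
  unfolding Qfun_def by measurable

lemma Sfun_nonneg: "summable (\<lambda>i. (\<Sum>j<Suc i. E j x) powr (-\<alpha>)) \<Longrightarrow> 0 \<le> Sfun \<alpha> x"
  unfolding Sfun_def by (intro suminf_nonneg) auto

lemma Qfun_bounds: "0 < w \<Longrightarrow> 0 \<le> Qfun \<alpha> w x \<and> Qfun \<alpha> w x \<le> 1"
proof -
  assume w: "0 < w"
  have "0 \<le> Sfun \<alpha> x" if "summable (\<lambda>i. (\<Sum>j<Suc i. E j x) powr (-\<alpha>))"
    unfolding Sfun_def using that by (intro suminf_nonneg) auto
  then show ?thesis using w by (auto simp: Qfun_eq)
qed

lemma Qfun_integral:
  assumes w: "0 < w" and a: "1 < \<alpha>"
  shows "(\<integral>x. Qfun \<alpha> w x \<partial>M) = exp (- (w powr (1/\<alpha>)) * Gamma (1 - 1/\<alpha>))"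
proof -
  note gA = gA_props[OF w a]
  define P where "P n x = (\<Prod>i<n. (1 - gA w \<alpha> (\<Sum>j<Suc i. E j x)))" for n x
  have Pm: "P n \<in> borel_measurable M" for n
  proof -
    have "gA w \<alpha> \<in> borel_measurable borel" unfolding gA_def[abs_def] by measurable
    then show ?thesis unfolding P_def by measurable
  qed
  have lim1: "(\<lambda>n. \<integral>x. P n x \<partial>M) \<longlonglongrightarrow> exp (- tailfun.G (gA w \<alpha>) 0)"
    unfolding P_def by (rule limA[OF gA(1) gA(3)])
  have lim2: "(\<lambda>n. \<integral>x. P n x \<partial>M) \<longlonglongrightarrow> (\<integral>x. Qfun \<alpha> w x \<partial>M)"
  proof (rule integral_dominated_convergence[where w="\<lambda>_. 1"])
    show "AE x in M. (\<lambda>n. P n x) \<longlonglongrightarrow> Qfun \<alpha> w x"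
      using AE_E_nonneg
    proof eventually_elim
      case (elim x)
      have Pe: "P n x = exp (- w * (\<Sum>i<n. (\<Sum>j<Suc i. E j x) powr (-\<alpha>)))" for n
      proof -
        have "P n x = (\<Prod>i<n. exp (- w * (\<Sum>j<Suc i. E j x) powr (-\<alpha>)))"
          unfolding P_def using elim by (intro prod.cong refl gA(4) sum_nonneg) auto
        also have "\<dots> = exp (\<Sum>i<n. - w * (\<Sum>j<Suc i. E j x) powr (-\<alpha>))"
          by (simp add: exp_sum)
        finally show ?thesis by (simp add: sum_distrib_left)
      qed
      have l: "(\<lambda>n. exp (- w * (\<Sum>i<n. (\<Sum>j<Suc i. E j x) powr (-\<alpha>)))) \<longlonglongrightarrow> Qfun \<alpha> w x"
        unfolding Qfun_eq[OF w] Sfun_def by (rule exp_partial_lim) (auto simp: w)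
      show ?case unfolding Pe by (rule l)
    qed
    show "AE x in M. norm (P n x) \<le> 1" for n
    proof (intro AE_I2)
      fix x
      have "0 \<le> P n x" "P n x \<le> 1" unfolding P_def
        using gA(3) tailfun.g_nn[OF gA(1)] by (auto intro: prod_nonneg prod_le_1)
      then show "norm (P n x) \<le> 1" by simp
    qed
  qed (auto intro: Pm)
  from LIMSEQ_unique[OF lim2 lim1] show ?thesis by (simp add: gA(2))
qed

lemma summable_AE:
  assumes a: "1 < \<alpha>"
  shows "AE x in M. summable (\<lambda>i. (\<Sum>j<Suc i. E j x) powr (-\<alpha>))"
proof -
  define A where "A = {x \<in> space M. 0 < Qfun \<alpha> 1 x}"
  have Am: "A \<in> sets M" unfolding A_def by measurable
  have A_iff: "x \<in> A \<longleftrightarrow> x \<in> space M \<and> summable (\<lambda>i. (\<Sum>j<Suc i. E j x) powr (-\<alpha>))" for x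
    unfolding A_def by (simp add: Qfun_eq)
  define \<Gamma> where "\<Gamma> = Gamma (1 - 1/\<alpha>)"
  have \<Gamma>: "0 < \<Gamma>" unfolding \<Gamma>_def using a by (intro Gamma_real_pos) (simp add: field_simps)
  have bound: "exp (- e) \<le> prob A" if e: "0 < e" for e
  proof -
    define w where "w = (e / \<Gamma>) powr \<alpha>"
    have w: "0 < w" unfolding w_def using e \<Gamma> by simp
    have ww: "w powr (1/\<alpha>) = e / \<Gamma>" unfolding w_def using e \<Gamma> a by (simp add: powr_powr)
    have "exp (- e) = (\<integral>x. Qfun \<alpha> w x \<partial>M)"
      using Qfun_integral[OF w a] ww \<Gamma> by (simp add: \<Gamma>_def)
    also have "\<dots> \<le> (\<integral>x. indicator A x \<partial>M)"
    proof (rule integral_mono)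
      show "integrable M (Qfun \<alpha> w)"
        by (rule integrable_const_bound[where B=1]) (use Qfun_bounds[OF w] in auto)
      show "integrable M (\<lambda>x. indicator A x :: real)"
        using Am by (intro integrable_real_indicator) (auto simp: less_top[symmetric])
      fix x assume "x \<in> space M"
      then show "Qfun \<alpha> w x \<le> indicator A x"
        using Sfun_nonneg[of x \<alpha>] w by (auto simp: indicator_def A_iff Qfun_eq[OF w])
    qed
    also have "\<dots> = prob A" using Am by simp
    finally show ?thesis .
  qed
  have "prob A \<ge> 1"
  proof (rule ccontr)
    assume "\<not> 1 \<le> prob A"
    then have p: "prob A < 1" by simp
    have "0 < prob A" using bound[of 1] by (smt (verit) exp_gt_zero)
    define e where "e = - ln (prob A) / 2"
    have e: "0 < e" unfolding e_def using p \<open>0 < prob A\<close> by simp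
    have "exp (- e) \<le> prob A" by (rule bound[OF e])
    then have "ln (exp (- e)) \<le> ln (prob A)" using \<open>0 < prob A\<close> by (subst ln_le_cancel_iff) auto
    then have "- e \<le> ln (prob A)" by simp
    then show False unfolding e_def using p \<open>0 < prob A\<close> by simp
  qed
  then have "prob A = 1" using prob_le_1[of A] by simp
  then have "AE x in M. x \<in> A" using Am by (simp add: prob_eq_1)
  then show ?thesis by (auto simp: A_iff)
qed

end


lemma nn_integral_powr_tail:
  fixes u e :: real
  assumes "0 < u" "e < -1"
  shows "(\<integral>\<^sup>+t. ennreal (t powr e) * indicator {u..} t \<partial>lborel) = ennreal (- (u powr (e+1)) / (e+1))"
  by (rule nn_integral_has_integral_lebesgue'[OF _ has_integral_powr_to_inf[OF assms(2,1)]]) simp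

lemma nn_integral_split_u:
  fixes f :: "real \<Rightarrow> real" and u :: real
  assumes "0 < u" and [measurable]: "f \<in> borel_measurable borel" and nn: "\<And>t. 0 \<le> f t"
  shows "(\<integral>\<^sup>+t. ennreal (f t) * indicator {0<..} t \<partial>lborel)
       = (\<integral>\<^sup>+t. ennreal (f t) * indicator {0<..<u} t \<partial>lborel) + (\<integral>\<^sup>+t. ennreal (f t) * indicator {u..} t \<partial>lborel)"
proof -
  have "(\<integral>\<^sup>+t. ennreal (f t) * indicator {0<..} t \<partial>lborel)
      = (\<integral>\<^sup>+t. ennreal (f t) * indicator {0<..<u} t + ennreal (f t) * indicator {u..} t \<partial>lborel)"
    using assms(1) by (intro nn_integral_cong) (auto simp: indicator_def)
  also have "\<dots> = (\<integral>\<^sup>+t. ennreal (f t) * indicator {0<..<u} t \<partial>lborel) + (\<integral>\<^sup>+t. ennreal (f t) * indicator {u..} t \<partial>lborel)"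
    by (rule nn_integral_add) auto
  finally show ?thesis .
qed

definition gB :: "real \<Rightarrow> real \<Rightarrow> real \<Rightarrow> real \<Rightarrow> real" where
  "gB \<theta> u \<alpha> t = (if t \<le> 0 then 0 else exp (\<theta> * (max t u) powr (-\<alpha>)) - 1)"

lemma gB_props:
  assumes u: "0 < u" and a: "1 < \<alpha>"
  defines "\<theta> \<equiv> u powr \<alpha>"
  shows "tailfun (gB \<theta> u \<alpha>) (exp 1 - 1)"
    "tailfun.G (gB \<theta> u \<alpha>) 0 \<le> u * (3 + 1 / (\<alpha> - 1))"
    "\<And>t. u \<le> t \<Longrightarrow> 1 + gB \<theta> u \<alpha> t = exp (\<theta> * t powr (-\<alpha>))"
proof -
  define y where "y t = \<theta> * (max t u) powr (-\<alpha>)" for t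
  have y01: "0 \<le> y t" "y t \<le> 1" for t
  proof -
    show "0 \<le> y t" unfolding y_def \<theta>_def by simp
    have "(max t u) powr (-\<alpha>) \<le> u powr (-\<alpha>)"
      using u a by (intro powr_mono2') auto
    then have "y t \<le> u powr \<alpha> * u powr (-\<alpha>)" unfolding y_def \<theta>_def
      by (intro mult_left_mono) auto
    also have "\<dots> = 1" using u by (simp add: powr_minus)
    finally show "y t \<le> 1" .
  qed
  have ym[measurable]: "y \<in> borel_measurable borel" unfolding y_def[abs_def] by measurable
  have g_eq: "gB \<theta> u \<alpha> t = (if t \<le> 0 then 0 else exp (y t) - 1)" for t
    by (simp add: gB_def y_def)
  have nn: "0 \<le> gB \<theta> u \<alpha> t" for t using y01[of t] by (simp add: g_eq)
  have le: "gB \<theta> u \<alpha> t \<le> exp 1 - 1" for t using y01[of t] by (simp add: g_eq)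
  have gle: "gB \<theta> u \<alpha> t \<le> (y t + (y t)\<^sup>2) * indicator {0<..} t" for t
    using exp_bound[OF y01[of t]] by (auto simp: g_eq indicator_def)
  have m: "gB \<theta> u \<alpha> \<in> borel_measurable borel" unfolding gB_def[abs_def] by measurable
  have c: "isCont (gB \<theta> u \<alpha>) t" if "0 < t" for t
  proof -
    have ev: "eventually (\<lambda>x. gB \<theta> u \<alpha> x = exp (\<theta> * (max x u) powr (-\<alpha>)) - 1) (nhds t)"
      using eventually_nhds_in_open[of "{0<..}" t] that
      by (auto elim!: eventually_mono simp: gB_def)
    have "isCont (\<lambda>x. exp (\<theta> * (max x u) powr (-\<alpha>)) - 1) t"
      using that u by (intro continuous_intros) (auto simp: max_def)
    then show ?thesis using isCont_cong[OF ev] by simp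
  qed
  have I1: "(\<integral>\<^sup>+t. ennreal (y t) * indicator {0<..} t \<partial>lborel) = ennreal (u + u / (\<alpha> - 1))"
  proof -
    have "(\<integral>\<^sup>+t. ennreal (y t) * indicator {0<..<u} t \<partial>lborel) = (\<integral>\<^sup>+t. ennreal 1 * indicator {0<..<u} t \<partial>lborel)"
      using u by (intro nn_integral_cong) (auto simp: indicator_def y_def \<theta>_def powr_minus)
    also have "\<dots> = ennreal u" using u by simp
    finally have A: "(\<integral>\<^sup>+t. ennreal (y t) * indicator {0<..<u} t \<partial>lborel) = ennreal u" .
    have "(\<integral>\<^sup>+t. ennreal (y t) * indicator {u..} t \<partial>lborel) = (\<integral>\<^sup>+t. ennreal \<theta> * (ennreal (t powr (-\<alpha>)) * indicator {u..} t) \<partial>lborel)"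
      using u by (intro nn_integral_cong) (auto simp: indicator_def y_def \<theta>_def ennreal_mult')
    also have "\<dots> = ennreal \<theta> * ennreal (- (u powr (-\<alpha>+1)) / (-\<alpha>+1))"
      using u a by (subst nn_integral_cmult) (auto simp: nn_integral_powr_tail)
    also have "\<dots> = ennreal (u / (\<alpha> - 1))"
      using u a by (simp add: ennreal_mult'[symmetric] \<theta>_def powr_add[symmetric] field_simps)
    finally have B: "(\<integral>\<^sup>+t. ennreal (y t) * indicator {u..} t \<partial>lborel) = ennreal (u / (\<alpha> - 1))" .
    show ?thesis using u a by (simp add: nn_integral_split_u[OF u ym y01(1)] A B ennreal_plus)
  qed
  have I2: "(\<integral>\<^sup>+t. ennreal ((y t)\<^sup>2) * indicator {0<..} t \<partial>lborel) \<le> ennreal (2 * u)"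
  proof -
    have "(\<integral>\<^sup>+t. ennreal ((y t)\<^sup>2) * indicator {0<..<u} t \<partial>lborel) = (\<integral>\<^sup>+t. ennreal 1 * indicator {0<..<u} t \<partial>lborel)"
      using u by (intro nn_integral_cong) (auto simp: indicator_def y_def \<theta>_def powr_minus)
    also have "\<dots> = ennreal u" using u by simp
    finally have A: "(\<integral>\<^sup>+t. ennreal ((y t)\<^sup>2) * indicator {0<..<u} t \<partial>lborel) = ennreal u" .
    have "(\<integral>\<^sup>+t. ennreal ((y t)\<^sup>2) * indicator {u..} t \<partial>lborel) = (\<integral>\<^sup>+t. ennreal (\<theta>\<^sup>2) * (ennreal (t powr (-2*\<alpha>)) * indicator {u..} t) \<partial>lborel)"
    proof (intro nn_integral_cong)
      fix t
      show "ennreal ((y t)\<^sup>2) * indicator {u..} t = ennreal (\<theta>\<^sup>2) * (ennreal (t powr (-2*\<alpha>)) * indicator {u..} t)"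
      proof (cases "u \<le> t")
        case True
        then have "(y t)\<^sup>2 = \<theta>\<^sup>2 * t powr (-2*\<alpha>)"
          using u by (simp add: y_def power2_eq_square powr_add[symmetric] max_def)
        then show ?thesis using True by (simp add: ennreal_mult' \<theta>_def)
      qed simp
    qed
    also have "\<dots> = ennreal (\<theta>\<^sup>2) * ennreal (- (u powr (-2*\<alpha>+1)) / (-2*\<alpha>+1))"
      using u a by (subst nn_integral_cmult) (auto simp: nn_integral_powr_tail)
    also have "\<dots> = ennreal (u / (2 * \<alpha> - 1))"
      using u a by (simp add: ennreal_mult'[symmetric] \<theta>_def powr_add[symmetric] field_simps power2_eq_square)
    also have "\<dots> \<le> ennreal u"
      using u a by (intro ennreal_leI) (simp add: field_simps)
    finally have B: "(\<integral>\<^sup>+t. ennreal ((y t)\<^sup>2) * indicator {u..} t \<partial>lborel) \<le> ennreal u" .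
    have "(\<integral>\<^sup>+t. ennreal ((y t)\<^sup>2) * indicator {0<..} t \<partial>lborel) \<le> ennreal u + ennreal u"
      using nn_integral_split_u[OF u, of "\<lambda>t. (y t)\<^sup>2"] A B by (auto intro: add_mono)
    also have "\<dots> = ennreal (2 * u)" using u by (simp add: ennreal_plus[symmetric])
    finally show ?thesis .
  qed
  have Ibound: "(\<integral>\<^sup>+t. ennreal (gB \<theta> u \<alpha> t) \<partial>lborel) \<le> ennreal (u * (3 + 1 / (\<alpha> - 1)))"
  proof -
    have "(\<integral>\<^sup>+t. ennreal (gB \<theta> u \<alpha> t) \<partial>lborel)
        \<le> (\<integral>\<^sup>+t. ennreal (y t) * indicator {0<..} t + ennreal ((y t)\<^sup>2) * indicator {0<..} t \<partial>lborel)"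
    proof (rule nn_integral_mono)
      fix t
      have "ennreal (gB \<theta> u \<alpha> t) \<le> ennreal ((y t + (y t)\<^sup>2) * indicator {0<..} t)"
        by (rule ennreal_leI[OF gle])
      also have "\<dots> = ennreal (y t) * indicator {0<..} t + ennreal ((y t)\<^sup>2) * indicator {0<..} t"
        using y01[of t] by (cases "0 < t") (simp_all add: ennreal_plus)
      finally show "ennreal (gB \<theta> u \<alpha> t) \<le> ennreal (y t) * indicator {0<..} t + ennreal ((y t)\<^sup>2) * indicator {0<..} t" .
    qed
    also have "\<dots> = (\<integral>\<^sup>+t. ennreal (y t) * indicator {0<..} t \<partial>lborel) + (\<integral>\<^sup>+t. ennreal ((y t)\<^sup>2) * indicator {0<..} t \<partial>lborel)"
      by (rule nn_integral_add) auto
    also have "\<dots> \<le> ennreal (u + u / (\<alpha> - 1)) + ennreal (2 * u)"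
      using I1 I2 by (intro add_mono) auto
    also have "\<dots> = ennreal (u * (3 + 1 / (\<alpha> - 1)))"
      using u a by (simp add: ennreal_plus[symmetric] field_simps)
    finally show ?thesis .
  qed
  define V where "V = enn2real (\<integral>\<^sup>+t. ennreal (gB \<theta> u \<alpha> t) \<partial>lborel)"
  have fin: "(\<integral>\<^sup>+t. ennreal (gB \<theta> u \<alpha> t) \<partial>lborel) < \<infinity>"
    by (rule le_less_trans[OF Ibound]) simp
  have Veq: "(\<integral>\<^sup>+t. ennreal (gB \<theta> u \<alpha> t) \<partial>lborel) = ennreal V"
    unfolding V_def by (rule ennreal_enn2real[symmetric]) (use fin in simp)
  have V0: "0 \<le> V" unfolding V_def by simp
  note tf = tailfun_from_nn[OF nn le _ m c Veq V0]
  show "tailfun (gB \<theta> u \<alpha>) (exp 1 - 1)" by (rule tf(1)) (simp add: gB_def)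
  have "ennreal V \<le> ennreal (u * (3 + 1 / (\<alpha> - 1)))" using Ibound unfolding Veq .
  moreover have "0 \<le> u * (3 + 1 / (\<alpha> - 1))" using u a by simp
  ultimately have "V \<le> u * (3 + 1 / (\<alpha> - 1))" by (simp add: ennreal_le_iff)
  moreover have "tailfun.G (gB \<theta> u \<alpha>) 0 = V" by (rule tf(2)) (simp add: gB_def)
  ultimately show "tailfun.G (gB \<theta> u \<alpha>) 0 \<le> u * (3 + 1 / (\<alpha> - 1))" by simp
  show "\<And>t. u \<le> t \<Longrightarrow> 1 + gB \<theta> u \<alpha> t = exp (\<theta> * t powr (-\<alpha>))"
    using u by (auto simp: gB_def)
qed


lemma Gamma_lower:
  fixes x :: real
  assumes x: "0 < x" "x < 1"
  shows "1 - 2 * x \<le> Gamma (1 + x)"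
proof -
  define t where "t = 2 * x / (1 + 2 * x)"
  have t: "0 \<le> t" "t \<le> 1" using x by (auto simp: t_def)
  have comb: "(1 - t) *\<^sub>R (1 + x) + t *\<^sub>R (1/2) = (1::real)"
  proof -
    have d: "1 + 2 * x \<noteq> 0" using x by simp
    show ?thesis unfolding t_def using d by (simp add: divide_simps) (simp add: algebra_simps)
  qed
  have "(ln \<circ> Gamma) ((1 - t) *\<^sub>R (1 + x) + t *\<^sub>R (1/2::real)) \<le> (1 - t) * (ln \<circ> Gamma) (1 + x) + t * (ln \<circ> Gamma) (1/2)"
    by (rule convex_onD[OF log_convex_Gamma_real t]) (use x in auto)
  then have "0 \<le> (1 - t) * ln (Gamma (1 + x)) + t * ln (sqrt pi)"
    unfolding comb by (simp add: Gamma_one_half_real)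
  moreover have "ln (sqrt pi) = ln pi / 2" by (simp add: ln_sqrt)
  ultimately have "0 \<le> (1 - t) * ln (Gamma (1 + x)) + t * (ln pi / 2)" by simp
  moreover have "(1 - t) * ln (Gamma (1 + x)) + t * (ln pi / 2) = (ln (Gamma (1 + x)) + x * ln pi) / (1 + 2 * x)"
  proof -
    have d: "1 + 2 * x \<noteq> 0" using x by simp
    show ?thesis unfolding t_def using d by (simp add: divide_simps) (simp add: algebra_simps)
  qed
  ultimately have "0 \<le> (ln (Gamma (1 + x)) + x * ln pi) / (1 + 2 * x)" by simp
  then have "0 \<le> ln (Gamma (1 + x)) + x * ln pi"
    using x by (simp add: zero_le_divide_iff)
  then have h: "- (x * ln pi) \<le> ln (Gamma (1 + x))" by simp
  have "ln pi \<le> 2"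
  proof -
    have "exp (1::real) \<ge> 2" using exp_ge_add_one_self[of 1] by simp
    then have "exp (2::real) \<ge> 4"
      using mult_mono[OF \<open>exp 1 \<ge> 2\<close> \<open>exp 1 \<ge> 2\<close>] by (simp add: exp_add[symmetric])
    then have "pi \<le> exp 2" using pi_less_4 by simp
    then show ?thesis using ln_le_cancel_iff[of pi "exp 2"] by simp
  qed
  have "1 - 2 * x \<le> 1 + (- (x * ln pi))"
    using \<open>ln pi \<le> 2\<close> x by (simp add: mult_left_mono)
  also have "\<dots> \<le> exp (- (x * ln pi))" by (rule exp_ge_add_one_self)
  also have "\<dots> \<le> exp (ln (Gamma (1 + x)))" using h by simp
  also have "\<dots> = Gamma (1 + x)" using x by simp
  finally show ?thesis .
qed


context pp
begin

lemma prob_L: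
  assumes a: "1 < \<alpha>"
  shows "prob {x\<in>space M. exp (- \<beta>) < Qfun \<alpha> 1 x} \<le> exp \<beta> * exp (- Gamma (1 - 1/\<alpha>))"
proof -
  let ?L = "{x\<in>space M. exp (- \<beta>) < Qfun \<alpha> 1 x}"
  have Lm: "?L \<in> sets M" by measurable
  have "exp (- \<beta>) * prob ?L = (\<integral>x. exp (- \<beta>) * indicator ?L x \<partial>M)"
    using Lm by simp
  also have "\<dots> \<le> (\<integral>x. Qfun \<alpha> 1 x \<partial>M)"
  proof (rule integral_mono)
    show "integrable M (\<lambda>x. exp (- \<beta>) * indicator ?L x)"
      using Lm by (intro integrable_mult_right integrable_real_indicator) (auto simp: less_top[symmetric])
    show "integrable M (Qfun \<alpha> 1)"
      by (rule integrable_const_bound[where B=1]) (use Qfun_bounds[of 1 \<alpha>] in auto)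
    fix x assume "x \<in> space M"
    then show "exp (- \<beta>) * indicator ?L x \<le> Qfun \<alpha> 1 x"
      using Qfun_bounds[of 1 \<alpha> x] by (auto simp: indicator_def)
  qed
  also have "\<dots> = exp (- Gamma (1 - 1/\<alpha>))"
    using Qfun_integral[of 1 \<alpha>] a by simp
  finally have "exp (- \<beta>) * prob ?L \<le> exp (- Gamma (1 - 1/\<alpha>))" .
  then show ?thesis
    by (simp add: exp_minus field_simps)
qed

lemma prob_E0:
  assumes u: "0 \<le> u"
  shows "prob {x\<in>space M. E 0 x < u} \<le> u"
proof -
  have "prob {x\<in>space M. E 0 x < u} \<le> prob {x\<in>space M. E 0 x \<le> u}"
    by (intro finite_measure_mono) auto
  also have "\<dots> = 1 - exp (- u * 1)"
    by (rule exponential_distributedD_le[OF dist u]) simp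
  also have "\<dots> \<le> u" using exp_ge_add_one_self[of "-u"] by simp
  finally show ?thesis .
qed

lemma prob_B:
  assumes u: "0 < u" and a: "1 < \<alpha>"
  shows "prob {x\<in>space M. u \<le> E 0 x \<and> (\<exists>n. \<beta> < (\<Sum>i<n. (\<Sum>j<Suc i. E j x) powr (-\<alpha>)))}
         \<le> exp (tailfun.G (gB (u powr \<alpha>) u \<alpha>) 0 - u powr \<alpha> * \<beta>)"
proof -
  define \<theta> where "\<theta> = u powr \<alpha>"
  have \<theta>: "0 < \<theta>" unfolding \<theta>_def using u by simp
  note gB = gB_props[OF u a, folded \<theta>_def]
  interpret tf: tailfun "gB \<theta> u \<alpha>" "exp 1 - 1" by (rule gB(1))
  define B where "B = {x\<in>space M. u \<le> E 0 x \<and> (\<exists>n. \<beta> < (\<Sum>i<n. (\<Sum>j<Suc i. E j x) powr (-\<alpha>)))}"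
  have Bm: "B \<in> sets M" unfolding B_def by measurable
  define Y where "Y n x = (\<Prod>i<n. (1 + gB \<theta> u \<alpha> (\<Sum>j<Suc i. E j x)))" for n x
  have gm: "gB \<theta> u \<alpha> \<in> borel_measurable borel" by (rule tf.g_meas)
  have Ym[measurable]: "Y n \<in> borel_measurable M" for n unfolding Y_def using gm by measurable
  have Y1: "1 \<le> Y n x" for n x unfolding Y_def using tf.g_nn by (intro prod_ge_1) auto
  have Yinc: "incseq (\<lambda>n x. ennreal (Y n x))"
  proof (rule incseq_SucI, rule le_funI)
    fix n x
    have "Y n x \<le> Y n x * (1 + gB \<theta> u \<alpha> (\<Sum>j<Suc n. E j x))"
      using Y1[of n x] tf.g_nn by (intro mult_le_cancel_left1[THEN iffD2]) auto
    then show "ennreal (Y n x) \<le> ennreal (Y (Suc n) x)" unfolding Y_def by (intro ennreal_leI) (simp add: mult.commute)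
  qed
  have Yint: "(\<integral>\<^sup>+x. ennreal (Y n x) \<partial>M) \<le> ennreal (exp (tf.G 0))" for n
  proof -
    have "(\<integral>\<^sup>+x. ennreal (Y n x) \<partial>M) \<le> (\<integral>\<^sup>+x. ennreal (Y n x * exp (tf.G (\<Sum>j<n. E j x))) \<partial>M)"
    proof (intro nn_integral_mono ennreal_leI)
      fix x
      have "1 \<le> exp (tf.G (\<Sum>j<n. E j x))" using tf.G_nn by simp
      then show "Y n x \<le> Y n x * exp (tf.G (\<Sum>j<n. E j x))"
        using Y1[of n x] by (simp add: mult_le_cancel_left1)
    qed
    also have "\<dots> = ennreal (exp (tf.G 0))"
      unfolding Y_def by (rule caseB[OF gB(1)])
    finally show ?thesis .
  qed
  have "ennreal (exp (\<theta> * \<beta>)) * emeasure M B = (\<integral>\<^sup>+x. ennreal (exp (\<theta> * \<beta>)) * indicator B x \<partial>M)"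
    using Bm by (simp add: nn_integral_cmult_indicator)
  also have "\<dots> \<le> (\<integral>\<^sup>+x. (SUP n. ennreal (Y n x)) \<partial>M)"
  proof (rule nn_integral_mono_AE)
    show "AE x in M. ennreal (exp (\<theta> * \<beta>)) * indicator B x \<le> (SUP n. ennreal (Y n x))"
      using AE_E_nonneg
    proof eventually_elim
      case (elim x)
      show ?case
      proof (cases "x \<in> B")
        case False then show ?thesis by simp
      next
        case True
        then obtain n where n: "\<beta> < (\<Sum>i<n. (\<Sum>j<Suc i. E j x) powr (-\<alpha>))" and u0: "u \<le> E 0 x"
          by (auto simp: B_def)
        have Ti: "u \<le> (\<Sum>j<Suc i. E j x)" for i
        proof -
          have "E 0 x \<le> (\<Sum>j<Suc i. E j x)"
            using elim by (intro member_le_sum) auto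
          then show ?thesis using u0 by simp
        qed
        have "Y n x = (\<Prod>i<n. exp (\<theta> * (\<Sum>j<Suc i. E j x) powr (-\<alpha>)))"
          unfolding Y_def by (intro prod.cong refl gB(3) Ti)
        also have "\<dots> = exp (\<theta> * (\<Sum>i<n. (\<Sum>j<Suc i. E j x) powr (-\<alpha>)))"
          by (simp add: exp_sum sum_distrib_left)
        finally have "exp (\<theta> * \<beta>) \<le> Y n x" using n \<theta> by simp
        then have "ennreal (exp (\<theta> * \<beta>)) \<le> ennreal (Y n x)" by (rule ennreal_leI)
        also have "\<dots> \<le> (SUP n. ennreal (Y n x))" by (rule SUP_upper) simp
        finally show ?thesis using True by simp
      qed
    qed
  qed
  also have "\<dots> = (SUP n. (\<integral>\<^sup>+x. ennreal (Y n x) \<partial>M))"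
    by (rule nn_integral_monotone_convergence_SUP[OF Yinc]) simp
  also have "\<dots> \<le> ennreal (exp (tf.G 0))"
    by (rule SUP_least) (rule Yint)
  finally have "ennreal (exp (\<theta> * \<beta>)) * emeasure M B \<le> ennreal (exp (tf.G 0))" .
  then have "ennreal (exp (\<theta> * \<beta>) * prob B) \<le> ennreal (exp (tf.G 0))"
    by (simp add: emeasure_eq_measure ennreal_mult')
  then have "exp (\<theta> * \<beta>) * prob B \<le> exp (tf.G 0)"
    by (simp add: ennreal_le_iff)
  then have "prob B \<le> exp (tf.G 0) / exp (\<theta> * \<beta>)"
    by (simp add: field_simps)
  also have "\<dots> = exp (tf.G 0 - \<theta> * \<beta>)" by (simp add: exp_diff)
  finally show ?thesis unfolding B_def \<theta>_def .
qed

end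


lemma exp42: "exp (- 4.2 :: real) \<le> 1 / 24"
proof -
  have "(1.7::real) \<le> exp 0.7" using exp_ge_add_one_self[of "0.7::real"] by simp
  then have "(1.7::real) ^ 6 \<le> exp 0.7 ^ 6" by (intro power_mono) auto
  also have "exp (0.7::real) ^ 6 = exp 4.2" by (simp add: exp_of_nat_mult[symmetric])
  finally have h: "(1.7::real) ^ 6 \<le> exp 4.2" .
  have "(24::real) \<le> 1.7 ^ 6" by (simp add: power_divide eval_nat_numeral)
  with h have "24 \<le> exp (4.2::real)" by linarith
  then show ?thesis by (simp add: exp_minus field_simps)
qed

lemma ln3: "1 \<le> ln (3::real)"
proof -
  have "exp (1::real) \<le> 1 + 1 + 1\<^sup>2" by (rule exp_bound) auto
  then have "exp 1 \<le> (3::real)" by simp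
  then show ?thesis by (subst ln_ge_iff) auto
qed

lemma arith_setup:
  fixes \<epsilon> \<delta> c :: real
  assumes e: "0 < \<epsilon>" "\<epsilon> \<le> 1" and d: "0 < \<delta>" "\<delta> \<le> 1/3" and c: "0 < c"
    and cb: "c \<le> exp (- 4.2) * \<delta> * \<epsilon>\<^sup>2 / (- ln \<delta>)"
  shows "c * (- ln \<delta>) \<le> \<delta> * \<epsilon>\<^sup>2 / 24" "ln 3 \<le> - ln \<delta>" "c \<le> c * (- ln \<delta>)"
proof -
  have "ln \<delta> \<le> ln (1/3)" using d by simp
  then show L3: "ln 3 \<le> - ln \<delta>" by (simp add: ln_div)
  then have L1: "1 \<le> - ln \<delta>" using ln3 by linarith
  have "c * (- ln \<delta>) \<le> exp (- 4.2) * \<delta> * \<epsilon>\<^sup>2"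
    using cb L1 by (simp add: field_simps)
  also have "\<dots> \<le> (1/24) * (\<delta> * \<epsilon>\<^sup>2)"
    using exp42 d by (simp only: mult.assoc) (intro mult_right_mono, auto)
  finally show "c * (- ln \<delta>) \<le> \<delta> * \<epsilon>\<^sup>2 / 24" by simp
  show "c \<le> c * (- ln \<delta>)" using mult_left_mono[OF L1, of c] c by simp
qed

lemma div_div_cancel: "d \<noteq> 0 \<Longrightarrow> (a / d) / (b / d) = a / (b::real)"
  by (cases "b = 0") (simp_all add: field_simps)

lemma arith1:
  fixes \<epsilon> \<delta> c :: real
  assumes e: "0 < \<epsilon>" "\<epsilon> \<le> 1" and d: "0 < \<delta>" "\<delta> \<le> 1/3" and c: "0 < c"
    and cb: "c \<le> exp (- 4.2) * \<delta> * \<epsilon>\<^sup>2 / (- ln \<delta>)"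
  shows "exp (exp (- \<epsilon> / 2) / c) * exp (- Gamma (1 - 1 / (1 + c))) \<le> \<delta> / 3"
proof -
  note s = arith_setup[OF assms]
  define L where "L = - ln \<delta>"
  define x where "x = c / (1 + c)"
  have x: "0 < x" "x < 1" using c by (auto simp: x_def)
  have x1: "1 - 1 / (1 + c) = x" using c by (simp add: x_def field_simps)
  have "x \<notin> \<int>\<^sub>\<le>\<^sub>0" using x by (auto elim!: nonpos_Ints_cases)
  then have "Gamma (1 + x) = x * Gamma x" using Gamma_plus1[of x] by (simp add: add.commute)
  then have Gx: "Gamma x = Gamma (1 + x) / x" using x by simp
  have "(1 - 2 * x) / x \<le> Gamma x" unfolding Gx
    using Gamma_lower[OF x] x by (intro divide_right_mono) auto
  moreover have "(1 - 2 * x) / x = (1 - c) / c"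
  proof -
    have xc: "x * (1 + c) = c" using c by (simp add: x_def)
    have "(1 + c) * (1 - 2 * x) = (1 + c) - 2 * (x * (1 + c))" by (simp add: algebra_simps)
    then have "(1 + c) * (1 - 2 * x) = 1 - c" unfolding xc by simp
    then have h0: "(1 - 2 * x) * (1 + c) = 1 - c" by (simp only: mult.commute)
    have cc: "1 + c \<noteq> 0" using c by simp
    have h1: "1 - 2 * x = (1 - c) / (1 + c)"
      by (subst nonzero_eq_divide_eq[OF cc]) (rule h0)
    show ?thesis unfolding h1 unfolding x_def by (rule div_div_cancel[OF cc])
  qed
  ultimately have G: "(1 - c) / c \<le> Gamma (1 - 1 / (1 + c))" unfolding x1 by simp
  have e1: "\<epsilon> / 3 \<le> 1 - exp (- \<epsilon> / 2)"
  proof -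
    have "1 + \<epsilon> / 2 \<le> exp (\<epsilon> / 2)" by (rule exp_ge_add_one_self)
    then have "exp (- \<epsilon> / 2) \<le> 1 / (1 + \<epsilon> / 2)"
      using e by (simp add: exp_minus field_simps)
    also have "\<dots> \<le> 1 - \<epsilon> / 3" using e by (simp add: field_simps)
    finally show ?thesis by simp
  qed
  have key: "c + c * (L + ln 3) \<le> 1 - exp (- \<epsilon> / 2)"
  proof -
    have "c * ln 3 \<le> c * L" using mult_left_mono[OF s(2), of c] c unfolding L_def by simp
    then have "c + c * (L + ln 3) \<le> 3 * (c * L)" using s(3) unfolding L_def by (simp add: algebra_simps)
    also have "\<dots> \<le> 3 * (\<delta> * \<epsilon>\<^sup>2 / 24)" using s(1) unfolding L_def by simp
    also have "\<dots> \<le> \<epsilon> / 3"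
    proof -
      have "\<epsilon>\<^sup>2 \<le> \<epsilon>" using e by (simp add: power2_eq_square mult_le_cancel_left1)
      then have "\<delta> * \<epsilon>\<^sup>2 \<le> 1 * \<epsilon>" using d e by (intro mult_mono) auto
      then show ?thesis using e by linarith
    qed
    finally show ?thesis using e1 by simp
  qed
  have "exp (- \<epsilon> / 2) / c - Gamma (1 - 1 / (1 + c)) \<le> exp (- \<epsilon> / 2) / c - (1 - c) / c"
    using G by simp
  also have "\<dots> = - ((1 - exp (- \<epsilon> / 2)) - c) / c" using c by (simp add: field_simps)
  also have "\<dots> \<le> - (c * (L + ln 3)) / c"
    using key c by (intro divide_right_mono) auto
  also have "\<dots> = ln (\<delta> / 3)" using c d by (simp add: L_def ln_div)
  finally have "exp (exp (- \<epsilon> / 2) / c - Gamma (1 - 1 / (1 + c))) \<le> exp (ln (\<delta> / 3))" by simp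
  then show ?thesis using d by (simp add: exp_diff exp_minus field_simps)
qed

lemma arith3:
  fixes \<epsilon> \<delta> c :: real
  assumes e: "0 < \<epsilon>" "\<epsilon> \<le> 1" and d: "0 < \<delta>" "\<delta> \<le> 1/3" and c: "0 < c"
    and cb: "c \<le> exp (- 4.2) * \<delta> * \<epsilon>\<^sup>2 / (- ln \<delta>)"
  shows "exp ((\<delta>/3) * (3 + 1 / c) - (\<delta>/3) powr (1 + c) * (exp (\<epsilon> / 2) / c)) \<le> \<delta> / 3"
proof -
  note s = arith_setup[OF assms]
  define L where "L = - ln \<delta>"
  define u where "u = \<delta> / 3"
  have u: "0 < u" using d by (simp add: u_def)
  have lnu: "ln u = - (L + ln 3)" using d by (simp add: u_def L_def ln_div)
  have up: "u powr (1 + c) = u * exp (- c * (L + ln 3))"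
  proof -
    have "u powr (1 + c) = u powr 1 * u powr c" by (rule powr_add)
    also have "u powr c = exp (c * ln u)" using u by (simp add: powr_def mult.commute)
    finally show ?thesis using u by (simp add: lnu algebra_simps)
  qed
  have E: "u * (3 + 1 / c) - u powr (1 + c) * (exp (\<epsilon> / 2) / c)
      = (u / c) * (3 * c + 1 - exp (\<epsilon> / 2 - c * (L + ln 3)))"
  proof -
    have "exp (\<epsilon> / 2 - c * (L + ln 3)) = exp (\<epsilon> / 2) * exp (- c * (L + ln 3))"
      by (metis exp_add diff_conv_add_uminus mult_minus_left)
    then show ?thesis using c unfolding up by (simp add: field_simps)
  qed
  have br: "3 * c + 1 - exp (\<epsilon> / 2 - c * (L + ln 3)) \<le> - (\<epsilon> / 4)"
  proof -
    have "1 + (\<epsilon> / 2 - c * (L + ln 3)) \<le> exp (\<epsilon> / 2 - c * (L + ln 3))" by (rule exp_ge_add_one_self)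
    moreover have "c * ln 3 \<le> c * L" using mult_left_mono[OF s(2), of c] c unfolding L_def by simp
    moreover have "5 * (c * L) \<le> 5 * (\<delta> * \<epsilon>\<^sup>2 / 24)" using s(1) unfolding L_def by simp
    moreover have "\<delta> * \<epsilon>\<^sup>2 \<le> \<epsilon> / 3"
    proof -
      have "\<epsilon>\<^sup>2 \<le> \<epsilon>" using e by (simp add: power2_eq_square mult_le_cancel_left1)
      then have "\<delta> * \<epsilon>\<^sup>2 \<le> (1/3) * \<epsilon>" using d e by (intro mult_mono) auto
      then show ?thesis by simp
    qed
    ultimately show ?thesis using s(3) e unfolding L_def by (simp add: algebra_simps)
  qed
  have "u * (3 + 1 / c) - u powr (1 + c) * (exp (\<epsilon> / 2) / c) \<le> (u / c) * (- (\<epsilon> / 4))"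
    unfolding E using u c br by (intro mult_left_mono) auto
  also have "\<dots> = - (\<delta> * \<epsilon> / (12 * c))" by (simp add: u_def field_simps)
  also have "\<dots> \<le> - (2 * L)"
  proof -
    have "24 * (c * L) \<le> \<delta> * \<epsilon>\<^sup>2" using s(1) unfolding L_def by simp
    also have "\<dots> \<le> \<delta> * \<epsilon>"
      using e d by (intro mult_left_mono) (auto simp: power2_eq_square mult_le_cancel_left1)
    finally have "2 * L \<le> \<delta> * \<epsilon> / (12 * c)" using c by (simp add: field_simps)
    then show ?thesis by simp
  qed
  also have "\<dots> \<le> ln (\<delta> / 3)"
    using s(2) d by (simp add: L_def ln_div)
  finally have "exp (u * (3 + 1 / c) - u powr (1 + c) * (exp (\<epsilon> / 2) / c)) \<le> exp (ln (\<delta> / 3))" by simp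
  then show ?thesis using d by (simp add: u_def)
qed


context pp
begin

lemma Sfun_meas[measurable]: "Sfun \<alpha> \<in> borel_measurable M"
  unfolding Sfun_def by measurable

lemma part1:
  assumes w: "0 < w" and a: "1 < \<alpha>"
  shows "(\<integral>x. exp (- w * Sfun \<alpha> x) \<partial>M) = exp (- (w powr (1/\<alpha>)) * Gamma (1 - 1/\<alpha>))"
proof -
  have "(\<integral>x. exp (- w * Sfun \<alpha> x) \<partial>M) = (\<integral>x. Qfun \<alpha> w x \<partial>M)"
  proof (rule integral_cong_AE)
    show "AE x in M. exp (- w * Sfun \<alpha> x) = Qfun \<alpha> w x"
      using summable_AE[OF a] by eventually_elim (simp add: Qfun_eq[OF w])
  qed auto
  also have "\<dots> = exp (- (w powr (1/\<alpha>)) * Gamma (1 - 1/\<alpha>))" by (rule Qfun_integral[OF w a])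
  finally show ?thesis .
qed

lemma part2:
  assumes a: "1 < \<alpha>" and e: "0 < \<epsilon>" "\<epsilon> \<le> 1" and d: "0 < \<delta>" "\<delta> \<le> 1/3"
    and ab: "\<alpha> \<le> exp (- 4.2) * \<delta> * \<epsilon>\<^sup>2 / (- ln \<delta>) + 1"
  shows "measure M {x \<in> space M. Sfun \<alpha> x \<notin> {exp (- \<epsilon> / 2) / (\<alpha> - 1) .. exp (\<epsilon> / 2) / (\<alpha> - 1)}} \<le> \<delta>"
proof -
  define c where "c = \<alpha> - 1"
  have c: "0 < c" using a by (simp add: c_def)
  have cb: "c \<le> exp (- 4.2) * \<delta> * \<epsilon>\<^sup>2 / (- ln \<delta>)" using ab by (simp add: c_def)
  have \<alpha>c: "\<alpha> = 1 + c" by (simp add: c_def)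
  define ba where "ba = exp (- \<epsilon> / 2) / c"
  define bb where "bb = exp (\<epsilon> / 2) / c"
  define u where "u = \<delta> / 3"
  have u: "0 < u" using d by (simp add: u_def)
  define X where "X = {x \<in> space M. Sfun \<alpha> x \<notin> {ba .. bb}}"
  define N where "N = {x \<in> space M. \<not> 0 < Qfun \<alpha> 1 x}"
  define L where "L = {x\<in>space M. exp (- ba) < Qfun \<alpha> 1 x}"
  define Z where "Z = {x\<in>space M. E 0 x < u}"
  define B where "B = {x\<in>space M. u \<le> E 0 x \<and> (\<exists>n. bb < (\<Sum>i<n. (\<Sum>j<Suc i. E j x) powr (-\<alpha>)))}"
  have [measurable]: "N \<in> sets M" "L \<in> sets M" "Z \<in> sets M" "B \<in> sets M"
    unfolding N_def L_def Z_def B_def by measurable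
  have sub: "X \<subseteq> ((N \<union> L) \<union> Z) \<union> B"
  proof
    fix x assume x: "x \<in> X"
    then have sp: "x \<in> space M" by (simp add: X_def)
    show "x \<in> ((N \<union> L) \<union> Z) \<union> B"
    proof (cases "0 < Qfun \<alpha> 1 x")
      case False then show ?thesis using sp by (simp add: N_def)
    next
      case True
      then have sm: "summable (\<lambda>i. (\<Sum>j<Suc i. E j x) powr (-\<alpha>))"
        by (simp add: Qfun_eq split: if_splits)
      have Q: "Qfun \<alpha> 1 x = exp (- Sfun \<alpha> x)" using sm by (simp add: Qfun_eq)
      from x have "Sfun \<alpha> x < ba \<or> bb < Sfun \<alpha> x" by (auto simp: X_def)
      then show ?thesis
      proof
        assume "Sfun \<alpha> x < ba"
        then have "x \<in> L" using sp Q by (simp add: L_def)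
        then show ?thesis by simp
      next
        assume gt: "bb < Sfun \<alpha> x"
        have "(\<lambda>n. \<Sum>i<n. (\<Sum>j<Suc i. E j x) powr (-\<alpha>)) \<longlonglongrightarrow> Sfun \<alpha> x"
          unfolding Sfun_def by (rule summable_LIMSEQ[OF sm])
        from order_tendstoD(1)[OF this gt] obtain n where "bb < (\<Sum>i<n. (\<Sum>j<Suc i. E j x) powr (-\<alpha>))"
          by (auto simp: eventually_sequentially)
        then have "x \<in> Z \<or> x \<in> B" using sp by (auto simp: Z_def B_def not_less)
        then show ?thesis by auto
      qed
    qed
  qed
  have pN: "prob N = 0"
  proof -
    have "AE x in M. 0 < Qfun \<alpha> 1 x"
      using summable_AE[OF a] by eventually_elim (simp add: Qfun_eq)
    then have "emeasure M N = 0"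
      unfolding N_def by (subst (asm) AE_iff_measurable[OF _ refl]) auto
    then show ?thesis by (simp add: emeasure_eq_measure)
  qed
  have pL: "prob L \<le> \<delta> / 3"
  proof -
    have "prob L \<le> exp ba * exp (- Gamma (1 - 1/\<alpha>))" unfolding L_def by (rule prob_L[OF a])
    also have "\<dots> \<le> \<delta> / 3" unfolding ba_def \<alpha>c by (rule arith1[OF e d c cb])
    finally show ?thesis .
  qed
  have pZ: "prob Z \<le> \<delta> / 3" unfolding Z_def using prob_E0[of u] u by (simp add: u_def)
  have pB: "prob B \<le> \<delta> / 3"
  proof -
    have "prob B \<le> exp (tailfun.G (gB (u powr \<alpha>) u \<alpha>) 0 - u powr \<alpha> * bb)"
      unfolding B_def by (rule prob_B[OF u a])
    also have "\<dots> \<le> exp (u * (3 + 1 / c) - u powr (1 + c) * bb)"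
      using gB_props(2)[OF u a] by (simp add: c_def)
    also have "\<dots> \<le> \<delta> / 3" unfolding u_def bb_def by (rule arith3[OF e d c cb])
    finally show ?thesis .
  qed
  have "measure M X \<le> measure M (((N \<union> L) \<union> Z) \<union> B)"
    by (rule finite_measure_mono[OF sub]) auto
  also have "\<dots> \<le> measure M ((N \<union> L) \<union> Z) + measure M B"
    by (rule measure_subadditive) auto
  also have "measure M ((N \<union> L) \<union> Z) \<le> measure M (N \<union> L) + measure M Z"
    by (rule measure_subadditive) auto
  also have "measure M (N \<union> L) \<le> measure M N + measure M L"
    by (rule measure_subadditive) auto
  finally have "measure M X \<le> prob N + prob L + prob Z + prob B" by simp
  also have "\<dots> \<le> \<delta>" using pN pL pZ pB by simp
  finally show ?thesis unfolding X_def ba_def bb_def c_def .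
qed

end

theorem mainTheorem12:
  fixes M :: "'a measure" and T :: "nat \<Rightarrow> 'a \<Rightarrow> real" and \<alpha> :: real
  assumes "prob_space M" and "poisson_points M T" and "\<alpha> > 1"
  shows "(\<forall>w::real. w > 0 \<longrightarrow>
            integral\<^sup>L M (\<lambda>x. exp (- w * (\<Sum>i. T i x powr (- \<alpha>))))
              = exp (- (w powr (1 / \<alpha>)) * Gamma (1 - 1 / \<alpha>))) \<and>
         (\<forall>\<epsilon> \<delta> :: real. 0 < \<epsilon> \<longrightarrow> \<epsilon> \<le> 1 \<longrightarrow> 0 < \<delta> \<longrightarrow> \<delta> \<le> 1 / 3 \<longrightarrow>
            \<alpha> \<le> exp (- 4.2) * \<delta> * \<epsilon>\<^sup>2 / (- ln \<delta>) + 1 \<longrightarrow>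
            measure M {x \<in> space M. (\<Sum>i. T i x powr (- \<alpha>)) \<notin>
               {exp (- \<epsilon> / 2) / (\<alpha> - 1) .. exp (\<epsilon> / 2) / (\<alpha> - 1)}} \<le> \<delta>)"
proof -
  from assms(2) obtain E where ind: "prob_space.indep_vars M (\<lambda>_. borel) E UNIV"
    and dist: "\<And>i. distributed M lborel (E i) (exponential_density 1)"
    and TE: "\<And>n x. x \<in> space M \<Longrightarrow> T n x = (\<Sum>i\<le>n. E i x)"
    unfolding poisson_points_def by blast
  interpret pp M E
    by (rule pp.intro[OF assms(1)], unfold_locales) (use ind dist in auto)
  have ST: "(\<Sum>i. T i x powr (- \<alpha>)) = Sfun \<alpha> x" if "x \<in> space M" for x
    unfolding Sfun_def using TE[OF that] by (simp add: lessThan_Suc_atMost)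
  show ?thesis
  proof (intro conjI allI impI)
    fix w :: real assume w: "0 < w"
    have "integral\<^sup>L M (\<lambda>x. exp (- w * (\<Sum>i. T i x powr (- \<alpha>)))) = (\<integral>x. exp (- w * Sfun \<alpha> x) \<partial>M)"
      by (rule Bochner_Integration.integral_cong) (simp_all add: ST)
    also have "\<dots> = exp (- (w powr (1/\<alpha>)) * Gamma (1 - 1/\<alpha>))" by (rule part1[OF w assms(3)])
    finally show "integral\<^sup>L M (\<lambda>x. exp (- w * (\<Sum>i. T i x powr (- \<alpha>)))) = exp (- (w powr (1 / \<alpha>)) * Gamma (1 - 1 / \<alpha>))" .
  next
    fix \<epsilon> \<delta> :: real
    assume h: "0 < \<epsilon>" "\<epsilon> \<le> 1" "0 < \<delta>" "\<delta> \<le> 1 / 3" "\<alpha> \<le> exp (- 4.2) * \<delta> * \<epsilon>\<^sup>2 / (- ln \<delta>) + 1"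
    have "{x \<in> space M. (\<Sum>i. T i x powr (- \<alpha>)) \<notin> {exp (- \<epsilon> / 2) / (\<alpha> - 1) .. exp (\<epsilon> / 2) / (\<alpha> - 1)}}
        = {x \<in> space M. Sfun \<alpha> x \<notin> {exp (- \<epsilon> / 2) / (\<alpha> - 1) .. exp (\<epsilon> / 2) / (\<alpha> - 1)}}"
      using ST by auto
    then show "measure M {x \<in> space M. (\<Sum>i. T i x powr (- \<alpha>)) \<notin>
               {exp (- \<epsilon> / 2) / (\<alpha> - 1) .. exp (\<epsilon> / 2) / (\<alpha> - 1)}} \<le> \<delta>"
      using part2[OF assms(3) h] by simp
  qed
qed


end
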